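(* Let $(X,d)$ be a compact doubling metric space with $\operatorname{diam}(X,d)=1/2$ and $\mathcal S$ a hyperbolic filling with parameters $a\ge\lambda\ge6$. Let $\rho:\mathcal S\to(0,\infty)$ satisfy (H1), (H2), (H3) and (H4) (with exponent $p$). Let $C\ge\eta_-^{-p}$ and let $(\mu_k)_{k\ge0}$ be probability mass functions, $\mu_k$ on $\mathcal S_k$, with $\mu_0$ the unit mass at $v_0$, such that for every $k\ge0$: $(\mu_k,\mu_{k+1})$ is $(C,\pi)$-compatible, $\mu_{k+1}$ is $(C,\pi)$-balanced, and there is a probability measure on $X\times X$ with marginals $\tilde\mu_k=\sum_{u\in\mathcal S_k}\mu_k(u)\delta_{\pi_1(u)}$ and $\tilde\mu_{k+1}$ giving zero mass to $\{(x_1,x_2):d(x_1,x_2)\ge(1+2\lambda a^{-1})a^{-k}\}$. Let $\mu$ be any subsequential weak limit of $(\tilde\mu_k)$. Then $\mu$ is $p$-homogeneous on $(X,\Theta_\rho)$; in particular $\dim_{\mathrm A}(X,\Theta_\rho)\le p$.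
   Context: Hyperbolic filling: $X_0\subset X_1\subset\cdots$ increasing, $X_n$ maximal $a^{-n}$-separated in $X$ ($X_0=\{x_0\}$); $\mathcal S_n=\{(x,n):x\in X_n\}$, $\mathcal S=\bigcup_n\mathcal S_n$, $\pi_1(x,n)=x$, $\pi_2(x,n)=n$, $v_0=(x_0,0)$, $B_v=B(\pi_1(v),a^{-\pi_2(v)})$. Each $(x,n)$, $n\ge1$, has a fixed parent $(y,n-1)$ with $d(x,y)=\min_{z\in X_{n-1}}d(x,z)$; descendants iterate the child relation; $\mathcal D_n(v)$ = descendants of $v$ in $\mathcal S_n$; genealogy $g(v)=(v_0,\dots,v_k=v)$ with $v_i$ parent of $v_{i+1}$. Graph $(\mathcal S,D_2)$: edges between a vertex and its parent, and horizontal edges between distinct $(x,n),(y,n)$ with $B(x,\lambda a^{-n})\cap B(y,\lambda a^{-n})\ne\emptyset$. Paths: vertex sequences with consecutive ones adjacent. $\pi(v)=\prod_{w\in g(v)}\rho(w)$, $L_\rho(\gamma)=\sum_{v\in\gamma}\pi(v)$. For distinct $x,y$: $\tilde n$ largest integer with $\{x,y\}\subset B(\tilde z,2a^{-\tilde n})$ for some $(\tilde z,\tilde n)\in\mathcal S$, $c(x,y)$ the set of such $(\tilde z,\tilde n)$, $\pi(c(x,y))=\max_{c(x,y)}\pi$. $\Gamma_n(x,y)$: paths $(v_1,\dots,v_k)$, $\pi_2(v_1)=\pi_2(v_k)=n$, $x\in B_{v_1}$, $y\in B_{v_k}$. (H1) $0<\eta_-\le\rho\le\eta_+<1$. (H2)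 $\pi(v)\le K_0\pi(w)$ for horizontally adjacent $v,w$. (H3) there is $K_1$ such that for distinct $x,y$ there is $n_0$ with $L_\rho(\gamma)\ge K_1^{-1}\pi(c(x,y))$ for all $n\ge n_0$, $\gamma\in\Gamma_n(x,y)$. (H4) $\sum_{w\in\mathcal D_n(v)}\pi(w)^p\le\pi(v)^p$ for all $v\in\mathcal S_m$, $n>m$. $\Theta_\rho(x,x)=0$ and for $x\ne y$, $\Theta_\rho(x,y)=\inf\sum_{i=0}^{k-1}\pi(c(x_i,x_{i+1}))$ over chains $x=x_0,\dots,x_k=y$ in $X$ with $x_i\ne x_{i+1}$. For $f:\mathcal S_k\to(0,\infty)$: $f$ is $(C,\pi)$-balanced if $f(u)/\pi(u)^p\le C^2f(v)/\pi(v)^p$ for all $u,v\in\mathcal S_k$ with $D_2(u,v)=1$. For $f_0:\mathcal S_k\to(0,\infty)$, $f_1:\mathcal S_{k+1}\to(0,\infty)$, the pair is $(C,\pi)$-compatible if $f_0(u)/\pi(u)^p\le f_1(v)/\pi(v)^p\le Cf_0(u)/\pi(u)^p$ whenever $u$ is the parent of $v$. A nonzero Borel measure $\mu$ is $p$-homogeneous on $(X,\Theta)$ if there is $C'$ with $\mu(B_\Theta(x,R))\le C'(R/r)^p\mu(B_\Theta(x,r))$ for all $x$, $0<r\le R$. Assouad dimension as usual: $\inf\{\beta:\exists C,\ N_r(B(x,R))\le C(R/r)^\beta\}$. *)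

theory Defs
  imports "HOL-Probability.Probability"
begin

definition Xball :: "'a::metric_space set \<Rightarrow> 'a \<Rightarrow> real \<Rightarrow> 'a set" where
  "Xball X x r = {y \<in> X. dist x y < r}"

definition doubling :: "'a::metric_space set \<Rightarrow> bool" where
  "doubling X \<longleftrightarrow> (\<exists>N::nat. \<forall>x\<in>X. \<forall>r>0. \<exists>F. finite F \<and> F \<subseteq> X \<and> card F \<le> N \<and>
       Xball X x (2 * r) \<subseteq> (\<Union>c\<in>F. Xball X c r))"

definition separated :: "'a::metric_space set \<Rightarrow> real \<Rightarrow> bool" where
  "separated A r \<longleftrightarrow> (\<forall>x\<in>A. \<forall>y\<in>A. x \<noteq> y \<longrightarrow> r \<le> dist x y)"

definition maximal_separated :: "'a::metric_space set \<Rightarrow> 'a set \<Rightarrow> real \<Rightarrow> bool" where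
  "maximal_separated X A r \<longleftrightarrow> A \<subseteq> X \<and> separated A r \<and>
     (\<forall>B. A \<subseteq> B \<and> B \<subseteq> X \<and> separated B r \<longrightarrow> B = A)"

text \<open>Vertices are pairs (x,n); par is the fixed parent map.\<close>

definition hyperbolic_filling ::
  "'a::metric_space set \<Rightarrow> real \<Rightarrow> real \<Rightarrow> (nat \<Rightarrow> 'a set) \<Rightarrow> 'a \<Rightarrow> ('a \<times> nat \<Rightarrow> 'a \<times> nat) \<Rightarrow> bool" where
  "hyperbolic_filling X a lam Xs x0 par \<longleftrightarrow>
     lam \<le> a \<and> 6 \<le> lam \<and> Xs 0 = {x0} \<and> (\<forall>n. Xs n \<subseteq> Xs (Suc n)) \<and>
     (\<forall>n. maximal_separated X (Xs n) ((1/a) ^ n)) \<and>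
     (\<forall>n. \<forall>x\<in>Xs (Suc n). fst (par (x, Suc n)) \<in> Xs n \<and> snd (par (x, Suc n)) = n \<and>
          (\<forall>z\<in>Xs n. dist x (fst (par (x, Suc n))) \<le> dist x z))"

definition verts :: "(nat \<Rightarrow> 'a set) \<Rightarrow> ('a \<times> nat) set" where
  "verts Xs = {(x, n). x \<in> Xs n}"

definition level :: "(nat \<Rightarrow> 'a set) \<Rightarrow> nat \<Rightarrow> ('a \<times> nat) set" where
  "level Xs n = {(x, m). m = n \<and> x \<in> Xs n}"

definition piw :: "('a \<times> nat \<Rightarrow> 'a \<times> nat) \<Rightarrow> ('a \<times> nat \<Rightarrow> real) \<Rightarrow> 'a \<times> nat \<Rightarrow> real" where
  "piw par rho v = (\<Prod>i\<in>{0..snd v}. rho ((par ^^ i) v))"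

definition desc :: "(nat \<Rightarrow> 'a set) \<Rightarrow> ('a \<times> nat \<Rightarrow> 'a \<times> nat) \<Rightarrow> nat \<Rightarrow> 'a \<times> nat \<Rightarrow> ('a \<times> nat) set" where
  "desc Xs par n v = {w \<in> level Xs n. (par ^^ (n - snd v)) w = v}"

definition vball :: "'a::metric_space set \<Rightarrow> real \<Rightarrow> 'a \<times> nat \<Rightarrow> 'a set" where
  "vball X a v = Xball X (fst v) ((1/a) ^ snd v)"

definition hadj :: "'a::metric_space set \<Rightarrow> real \<Rightarrow> real \<Rightarrow> (nat \<Rightarrow> 'a set) \<Rightarrow> 'a \<times> nat \<Rightarrow> 'a \<times> nat \<Rightarrow> bool" where
  "hadj X a lam Xs u v \<longleftrightarrow> u \<in> verts Xs \<and> v \<in> verts Xs \<and> u \<noteq> v \<and> snd u = snd v \<and>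
     Xball X (fst u) (lam * (1/a) ^ snd u) \<inter> Xball X (fst v) (lam * (1/a) ^ snd v) \<noteq> {}"

text \<open>Edges of the graph (S, D_2); adj u v iff D_2(u,v) = 1.\<close>
definition adj :: "'a::metric_space set \<Rightarrow> real \<Rightarrow> real \<Rightarrow> (nat \<Rightarrow> 'a set) \<Rightarrow> ('a \<times> nat \<Rightarrow> 'a \<times> nat)
    \<Rightarrow> 'a \<times> nat \<Rightarrow> 'a \<times> nat \<Rightarrow> bool" where
  "adj X a lam Xs par u v \<longleftrightarrow> hadj X a lam Xs u v \<or>
     (u \<in> verts Xs \<and> v \<in> verts Xs \<and> ((0 < snd u \<and> par u = v) \<or> (0 < snd v \<and> par v = u)))"

definition gpath :: "(nat \<Rightarrow> 'a set) \<Rightarrow> ('a \<times> nat \<Rightarrow> 'a \<times> nat \<Rightarrow> bool) \<Rightarrow> ('a \<times> nat) list \<Rightarrow> bool" where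
  "gpath Xs E \<gamma> \<longleftrightarrow> \<gamma> \<noteq> [] \<and> set \<gamma> \<subseteq> verts Xs \<and> (\<forall>i. Suc i < length \<gamma> \<longrightarrow> E (\<gamma> ! i) (\<gamma> ! Suc i))"

definition Gamma :: "'a::metric_space set \<Rightarrow> real \<Rightarrow> real \<Rightarrow> (nat \<Rightarrow> 'a set) \<Rightarrow> ('a \<times> nat \<Rightarrow> 'a \<times> nat)
    \<Rightarrow> nat \<Rightarrow> 'a \<Rightarrow> 'a \<Rightarrow> ('a \<times> nat) list set" where
  "Gamma X a lam Xs par n x y = {\<gamma>. gpath Xs (adj X a lam Xs par) \<gamma> \<and>
     snd (hd \<gamma>) = n \<and> snd (last \<gamma>) = n \<and> x \<in> vball X a (hd \<gamma>) \<and> y \<in> vball X a (last \<gamma>)}"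

definition Lrho :: "('a \<times> nat \<Rightarrow> 'a \<times> nat) \<Rightarrow> ('a \<times> nat \<Rightarrow> real) \<Rightarrow> ('a \<times> nat) list \<Rightarrow> real" where
  "Lrho par rho \<gamma> = sum_list (map (piw par rho) \<gamma>)"

definition ctop :: "'a::metric_space set \<Rightarrow> real \<Rightarrow> (nat \<Rightarrow> 'a set) \<Rightarrow> 'a \<Rightarrow> 'a \<Rightarrow> nat" where
  "ctop X a Xs x y = (GREATEST n. \<exists>z\<in>Xs n. x \<in> Xball X z (2 * (1/a) ^ n) \<and> y \<in> Xball X z (2 * (1/a) ^ n))"

definition cset :: "'a::metric_space set \<Rightarrow> real \<Rightarrow> (nat \<Rightarrow> 'a set) \<Rightarrow> 'a \<Rightarrow> 'a \<Rightarrow> ('a \<times> nat) set" where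
  "cset X a Xs x y = {v \<in> verts Xs. snd v = ctop X a Xs x y \<and>
     x \<in> Xball X (fst v) (2 * (1/a) ^ snd v) \<and> y \<in> Xball X (fst v) (2 * (1/a) ^ snd v)}"

definition piC :: "'a::metric_space set \<Rightarrow> real \<Rightarrow> (nat \<Rightarrow> 'a set) \<Rightarrow> ('a \<times> nat \<Rightarrow> 'a \<times> nat)
    \<Rightarrow> ('a \<times> nat \<Rightarrow> real) \<Rightarrow> 'a \<Rightarrow> 'a \<Rightarrow> real" where
  "piC X a Xs par rho x y = Max (piw par rho ` cset X a Xs x y)"

definition Theta :: "'a::metric_space set \<Rightarrow> real \<Rightarrow> (nat \<Rightarrow> 'a set) \<Rightarrow> ('a \<times> nat \<Rightarrow> 'a \<times> nat)
    \<Rightarrow> ('a \<times> nat \<Rightarrow> real) \<Rightarrow> 'a \<Rightarrow> 'a \<Rightarrow> real" where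
  "Theta X a Xs par rho x y = (if x = y then 0 else
     Inf {(\<Sum>i<length xs - 1. piC X a Xs par rho (xs ! i) (xs ! Suc i)) | xs.
            2 \<le> length xs \<and> hd xs = x \<and> last xs = y \<and> set xs \<subseteq> X \<and>
            (\<forall>i. Suc i < length xs \<longrightarrow> xs ! i \<noteq> xs ! Suc i)})"

definition H1 :: "(nat \<Rightarrow> 'a set) \<Rightarrow> ('a \<times> nat \<Rightarrow> real) \<Rightarrow> real \<Rightarrow> real \<Rightarrow> bool" where
  "H1 Xs rho em ep \<longleftrightarrow> 0 < em \<and> ep < 1 \<and> (\<forall>v\<in>verts Xs. em \<le> rho v \<and> rho v \<le> ep)"

definition H2 :: "'a::metric_space set \<Rightarrow> real \<Rightarrow> real \<Rightarrow> (nat \<Rightarrow> 'a set) \<Rightarrow> ('a \<times> nat \<Rightarrow> 'a \<times> nat)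
    \<Rightarrow> ('a \<times> nat \<Rightarrow> real) \<Rightarrow> bool" where
  "H2 X a lam Xs par rho \<longleftrightarrow> (\<exists>K0. \<forall>u v. hadj X a lam Xs u v \<longrightarrow> piw par rho u \<le> K0 * piw par rho v)"

definition H3 :: "'a::metric_space set \<Rightarrow> real \<Rightarrow> real \<Rightarrow> (nat \<Rightarrow> 'a set) \<Rightarrow> ('a \<times> nat \<Rightarrow> 'a \<times> nat)
    \<Rightarrow> ('a \<times> nat \<Rightarrow> real) \<Rightarrow> bool" where
  "H3 X a lam Xs par rho \<longleftrightarrow> (\<exists>K1>0. \<forall>x\<in>X. \<forall>y\<in>X. x \<noteq> y \<longrightarrow>
     (\<exists>n0. \<forall>n\<ge>n0. \<forall>\<gamma>\<in>Gamma X a lam Xs par n x y.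
        piC X a Xs par rho x y / K1 \<le> Lrho par rho \<gamma>))"

definition H4 :: "(nat \<Rightarrow> 'a set) \<Rightarrow> ('a \<times> nat \<Rightarrow> 'a \<times> nat) \<Rightarrow> ('a \<times> nat \<Rightarrow> real) \<Rightarrow> real \<Rightarrow> bool" where
  "H4 Xs par rho p \<longleftrightarrow> (\<forall>m n v. v \<in> level Xs m \<and> m < n \<longrightarrow>
     (\<Sum>w\<in>desc Xs par n v. piw par rho w powr p) \<le> piw par rho v powr p)"

definition balanced :: "'a::metric_space set \<Rightarrow> real \<Rightarrow> real \<Rightarrow> (nat \<Rightarrow> 'a set) \<Rightarrow> ('a \<times> nat \<Rightarrow> 'a \<times> nat)
    \<Rightarrow> ('a \<times> nat \<Rightarrow> real) \<Rightarrow> real \<Rightarrow> real \<Rightarrow> nat \<Rightarrow> ('a \<times> nat \<Rightarrow> real) \<Rightarrow> bool" where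
  "balanced X a lam Xs par rho p C k f \<longleftrightarrow>
     (\<forall>u\<in>level Xs k. \<forall>v\<in>level Xs k. adj X a lam Xs par u v \<longrightarrow>
        f u / piw par rho u powr p \<le> C^2 * f v / piw par rho v powr p)"

definition compatible :: "(nat \<Rightarrow> 'a set) \<Rightarrow> ('a \<times> nat \<Rightarrow> 'a \<times> nat) \<Rightarrow> ('a \<times> nat \<Rightarrow> real) \<Rightarrow> real \<Rightarrow> real
    \<Rightarrow> nat \<Rightarrow> ('a \<times> nat \<Rightarrow> real) \<Rightarrow> ('a \<times> nat \<Rightarrow> real) \<Rightarrow> bool" where
  "compatible Xs par rho p C k f0 f1 \<longleftrightarrow>
     (\<forall>v\<in>level Xs (Suc k).
        f0 (par v) / piw par rho (par v) powr p \<le> f1 v / piw par rho v powr p \<and>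
        f1 v / piw par rho v powr p \<le> C * f0 (par v) / piw par rho (par v) powr p)"

definition tmu :: "('a::metric_space \<times> nat) set \<Rightarrow> ('a \<times> nat \<Rightarrow> real) \<Rightarrow> 'a measure" where
  "tmu S f = measure_of UNIV (sets borel) (\<lambda>A. \<Sum>u\<in>{u\<in>S. fst u \<in> A}. ennreal (f u))"

definition coupled :: "'a::metric_space measure \<Rightarrow> 'a measure \<Rightarrow> real \<Rightarrow> bool" where
  "coupled M1 M2 r \<longleftrightarrow> (\<exists>P :: ('a \<times> 'a) measure. prob_space P \<and> sets P = sets borel \<and>
     distr P borel fst = M1 \<and> distr P borel snd = M2 \<and>
     emeasure P {(x1, x2). r \<le> dist x1 x2} = 0)"

definition sub_weak_limit :: "(nat \<Rightarrow> 'a::metric_space measure) \<Rightarrow> 'a measure \<Rightarrow> bool" where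
  "sub_weak_limit M mu \<longleftrightarrow> sets mu = sets borel \<and> finite_measure mu \<and>
     (\<exists>s. strict_mono s \<and> (\<forall>g::'a \<Rightarrow> real. continuous_on UNIV g \<and> bounded (range g) \<longrightarrow>
        (\<lambda>j. integral\<^sup>L (M (s j)) g) \<longlonglongrightarrow> integral\<^sup>L mu g))"

definition Dball :: "'a set \<Rightarrow> ('a \<Rightarrow> 'a \<Rightarrow> real) \<Rightarrow> 'a \<Rightarrow> real \<Rightarrow> 'a set" where
  "Dball X D x r = {y \<in> X. D x y < r}"

definition p_homogeneous :: "'a set \<Rightarrow> ('a \<Rightarrow> 'a \<Rightarrow> real) \<Rightarrow> real \<Rightarrow> 'a measure \<Rightarrow> bool" where
  "p_homogeneous X D p mu \<longleftrightarrow> emeasure mu X \<noteq> 0 \<and>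
     (\<exists>C'. \<forall>x\<in>X. \<forall>r R. 0 < r \<and> r \<le> R \<longrightarrow>
        measure mu (Dball X D x R) \<le> C' * (R / r) powr p * measure mu (Dball X D x r))"

definition cover_num :: "'a set \<Rightarrow> ('a \<Rightarrow> 'a \<Rightarrow> real) \<Rightarrow> 'a set \<Rightarrow> real \<Rightarrow> enat" where
  "cover_num X D A r = (INF F\<in>{F. finite F \<and> F \<subseteq> X \<and> A \<subseteq> (\<Union>c\<in>F. Dball X D c r)}. enat (card F))"

definition assouad_dim :: "'a set \<Rightarrow> ('a \<Rightarrow> 'a \<Rightarrow> real) \<Rightarrow> ereal" where
  "assouad_dim X D = Inf {ereal \<beta> | \<beta>. \<exists>C. \<forall>x\<in>X. \<forall>r R. 0 < r \<and> r \<le> R \<longrightarrow>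
      ereal_of_enat (cover_num X D (Dball X D x R) r) \<le> ereal (C * (R / r) powr \<beta>)}"

end

theory Submission
  imports Defs
begin

lemma tmu_sets[simp]: "sets (tmu S f) = sets borel"
  unfolding tmu_def using sets.sigma_sets_eq[of borel] by (simp add: sets_measure_of_conv)

lemma tmu_space[simp]: "space (tmu S f) = UNIV"
  unfolding tmu_def by simp

lemma tmu_emeasure:
  assumes fin: "finite S" and nn: "\<And>u. u \<in> S \<Longrightarrow> 0 \<le> f u" and A: "A \<in> sets borel"
  shows "emeasure (tmu S f) A = ennreal (\<Sum>u\<in>{u\<in>S. fst u \<in> A}. f u)"
proof -
  define \<nu> where "\<nu> = (\<lambda>A. \<Sum>u\<in>{u\<in>S. fst u \<in> A}. ennreal (f u))"
  have nu_alt: "\<nu> B = (\<Sum>u\<in>S. ennreal (f u) * indicator B (fst u))" for B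
    unfolding \<nu>_def using fin
    by (subst sum.inter_filter[OF fin]) (rule sum.cong, auto simp: indicator_def)
  have eq: "\<nu> = (\<lambda>A. ennreal (\<Sum>u\<in>{u\<in>S. fst u \<in> A}. f u))"
    unfolding \<nu>_def by (intro ext sum_ennreal) (use nn in auto)
  have e: "emeasure (measure_of UNIV (sets borel) \<nu>) A = \<nu> A"
  proof (rule emeasure_measure_of_sigma)
    show "sigma_algebra UNIV (sets borel)"
      using sets.sigma_algebra_axioms[of borel] by simp
    show "positive (sets borel) \<nu>" unfolding positive_def \<nu>_def by simp
    show "countably_additive (sets borel) \<nu>"
      unfolding countably_additive_def
    proof (intro allI impI)
      fix B :: "nat \<Rightarrow> 'a set" assume "range B \<subseteq> sets borel" "disjoint_family B"
      have "(\<Sum>i. \<nu> (B i)) = (\<Sum>i. \<Sum>u\<in>S. ennreal (f u) * indicator (B i) (fst u))"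
        by (simp add: nu_alt)
      also have "\<dots> = (\<Sum>u\<in>S. \<Sum>i. ennreal (f u) * indicator (B i) (fst u))"
        by (rule suminf_sum) auto
      also have "\<dots> = (\<Sum>u\<in>S. ennreal (f u) * (\<Sum>i. indicator (B i) (fst u)))"
        by (simp add: ennreal_suminf_cmult)
      also have "\<dots> = \<nu> (\<Union>i. B i)"
        using suminf_indicator[OF \<open>disjoint_family B\<close>] by (simp add: nu_alt)
      finally show "(\<Sum>i. \<nu> (B i)) = \<nu> (\<Union> (range B))" .
    qed
  qed (rule A)
  have "tmu S f = measure_of UNIV (sets borel) \<nu>" unfolding tmu_def \<nu>_def ..
  then show ?thesis using e eq by simp
qed

definition Mk :: "('a \<times> nat) set \<Rightarrow> ('a \<times> nat \<Rightarrow> real) \<Rightarrow> 'a set \<Rightarrow> real" where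
  "Mk S f A = (\<Sum>u\<in>{u\<in>S. fst u \<in> A}. f u)"

lemma tmu_measure:
  assumes "finite S" "\<And>u. u \<in> S \<Longrightarrow> 0 \<le> f u" "A \<in> sets borel"
  shows "measure (tmu S f) A = Mk S f A"
proof -
  have e: "emeasure (tmu S f) A = ennreal (Mk S f A)" unfolding Mk_def by (rule tmu_emeasure[OF assms])
  have "0 \<le> Mk S f A" unfolding Mk_def using assms(2) by (intro sum_nonneg) auto
  then show ?thesis by (simp add: measure_def e)
qed

lemma tmu_finite:
  assumes "finite S" "\<And>u. u \<in> S \<Longrightarrow> 0 \<le> f u"
  shows "finite_measure (tmu S f)"
  by (rule finite_measureI) (simp add: tmu_emeasure[OF assms])

lemma Mk_mono:
  assumes "finite S" "\<And>u. u \<in> S \<Longrightarrow> 0 \<le> f u" "A \<subseteq> B"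
  shows "Mk S f A \<le> Mk S f B"
  unfolding Mk_def using assms by (intro sum_mono2) auto

lemma coupled_ball:
  fixes M1 M2 :: "'a::metric_space measure"
  assumes "coupled M1 M2 \<delta>"
  shows "emeasure M1 (ball p s) \<le> emeasure M2 (ball p (s+\<delta>))"
    and "emeasure M2 (ball p s) \<le> emeasure M1 (ball p (s+\<delta>))"
proof -
  obtain P :: "('a \<times> 'a) measure" where P: "prob_space P" "sets P = sets borel"
     "distr P borel fst = M1" "distr P borel snd = M2"
     "emeasure P {(x1, x2). \<delta> \<le> dist x1 x2} = 0"
    using assms unfolding coupled_def by blast
  have sp: "space P = UNIV" using sets_eq_imp_space_eq[OF P(2)] by simp
  have mf: "fst \<in> measurable P borel" "snd \<in> measurable P borel"
    by (subst measurable_cong_sets[OF P(2) refl], intro borel_measurable_continuous_onI continuous_intros)+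
  define D where "D = {z::'a\<times>'a. \<delta> \<le> dist (fst z) (snd z)}"
  have D0: "emeasure P D = 0" using P(5) unfolding D_def by (simp add: case_prod_beta')
  have "closed D" unfolding D_def
    by (intro closed_Collect_le continuous_intros)
  then have Dm: "D \<in> sets P" using P(2) by simp
  have e1: "emeasure M1 A = emeasure P (fst -` A)" if "A \<in> sets borel" for A
    using emeasure_distr[OF mf(1) that] P(3) sp by simp
  have e2: "emeasure M2 A = emeasure P (snd -` A)" if "A \<in> sets borel" for A
    using emeasure_distr[OF mf(2) that] P(4) sp by simp
  have m1: "fst -` A \<in> sets P" "snd -` A \<in> sets P" if "A \<in> sets borel" for A
    using measurable_sets[OF mf(1) that] measurable_sets[OF mf(2) that] sp by auto
  have "fst -` ball p s \<subseteq> snd -` ball p (s+\<delta>) \<union> D"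
  proof
    fix z :: "'a \<times> 'a" assume "z \<in> fst -` ball p s"
    then have z: "dist p (fst z) < s" by simp
    have "dist p (snd z) \<le> dist p (fst z) + dist (fst z) (snd z)" by (rule dist_triangle)
    then show "z \<in> snd -` ball p (s+\<delta>) \<union> D" using z unfolding D_def
      by (cases "\<delta> \<le> dist (fst z) (snd z)") (auto simp: dist_commute)
  qed
  then have "emeasure P (fst -` ball p s) \<le> emeasure P (snd -` ball p (s+\<delta>) \<union> D)"
    using m1 Dm by (intro emeasure_mono) auto
  also have "\<dots> \<le> emeasure P (snd -` ball p (s+\<delta>)) + emeasure P D"
    using m1 Dm by (intro emeasure_subadditive) auto
  finally show "emeasure M1 (ball p s) \<le> emeasure M2 (ball p (s+\<delta>))"
    using e1 e2 D0 by simp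
  have "snd -` ball p s \<subseteq> fst -` ball p (s+\<delta>) \<union> D"
  proof
    fix z :: "'a \<times> 'a" assume "z \<in> snd -` ball p s"
    then have z: "dist p (snd z) < s" by simp
    have "dist p (fst z) \<le> dist p (snd z) + dist (snd z) (fst z)" by (rule dist_triangle)
    then show "z \<in> fst -` ball p (s+\<delta>) \<union> D" using z unfolding D_def
      by (cases "\<delta> \<le> dist (fst z) (snd z)") (auto simp: dist_commute)
  qed
  then have "emeasure P (snd -` ball p s) \<le> emeasure P (fst -` ball p (s+\<delta>) \<union> D)"
    using m1 Dm by (intro emeasure_mono) auto
  also have "\<dots> \<le> emeasure P (fst -` ball p (s+\<delta>)) + emeasure P D"
    using m1 Dm by (intro emeasure_subadditive) auto
  finally show "emeasure M2 (ball p s) \<le> emeasure M1 (ball p (s+\<delta>))"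
    using e1 e2 D0 by simp
qed

locale wlim =
  fixes M :: "nat \<Rightarrow> 'a::metric_space measure" and mu :: "'a measure" and s :: "nat \<Rightarrow> nat"
  assumes lim: "\<forall>g::'a \<Rightarrow> real. continuous_on UNIV g \<and> bounded (range g) \<longrightarrow>
        (\<lambda>j. integral\<^sup>L (M (s j)) g) \<longlonglongrightarrow> integral\<^sup>L mu g"
    and sM: "\<And>k. sets (M k) = sets borel" and fM: "\<And>k. finite_measure (M k)"
    and smu: "sets mu = sets borel" and fmu: "finite_measure mu"
begin

lemma spM: "space (M k) = UNIV" using sets_eq_imp_space_eq[OF sM[of k]] by simp
lemma spmu: "space mu = UNIV" using sets_eq_imp_space_eq[OF smu] by simp

lemma integrableM: 
  assumes "continuous_on UNIV g" "\<And>y. \<bar>g y\<bar> \<le> B"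
  shows "integrable (M k) (g :: 'a \<Rightarrow> real)" "integrable mu g"
proof -
  have m: "g \<in> borel_measurable borel" by (rule borel_measurable_continuous_onI[OF assms(1)])
  show "integrable (M k) g"
    by (rule finite_measure.integrable_const_bound[OF fM, where B=B])
       (use assms m in \<open>auto simp: measurable_cong_sets[OF sM refl]\<close>)
  show "integrable mu g"
    by (rule finite_measure.integrable_const_bound[OF fmu, where B=B])
       (use assms m in \<open>auto simp: measurable_cong_sets[OF smu refl]\<close>)
qed

lemma intI: "A \<in> sets borel \<Longrightarrow> integrable (M k) (indicator A :: 'a \<Rightarrow> real)"
  "A \<in> sets borel \<Longrightarrow> integrable mu (indicator A :: 'a \<Rightarrow> real)"
  by (auto intro!: integrable_real_indicator simp: sM smu finite_measure.emeasure_finite[OF fM]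
     finite_measure.emeasure_finite[OF fmu] less_top[symmetric])

lemma bump:
  fixes p :: 'a and R1 R2 :: real
  assumes "R1 < R2"
  and g_def: "g = (\<lambda>y. max 0 (min 1 ((R2 - dist p y) / (R2 - R1))))"
  shows "continuous_on UNIV g" "\<And>y. \<bar>g y\<bar> \<le> 1" "bounded (range g)"
    "\<And>y. indicator (ball p R1) y \<le> g y" "\<And>y. g y \<le> indicator (ball p R2) y"
proof -
  show "continuous_on UNIV g" unfolding g_def using assms by (intro continuous_intros) auto
  show b: "\<bar>g y\<bar> \<le> 1" for y unfolding g_def by auto
  then show "bounded (range g)" unfolding bounded_iff by auto
  show "indicator (ball p R1) y \<le> g y" for y
    using assms unfolding g_def by (auto simp: indicator_def field_simps)
  show "g y \<le> indicator (ball p R2) y" for y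
    using assms unfolding g_def by (auto simp: indicator_def field_simps divide_le_0_iff)
qed

lemma weak_lower:
  assumes R: "R1 < R2" and ev: "\<And>j. j \<ge> J \<Longrightarrow> c \<le> measure (M (s j)) (ball p R1)"
  shows "c \<le> measure mu (ball p R2)"
proof -
  define g where "g = (\<lambda>y. max 0 (min 1 ((R2 - dist p y) / (R2 - R1))))"
  note b = bump[OF R g_def]
  have "c \<le> integral\<^sup>L (M (s j)) g" if "j \<ge> J" for j
  proof -
    have "c \<le> measure (M (s j)) (ball p R1)" using ev that .
    also have "\<dots> = integral\<^sup>L (M (s j)) (indicator (ball p R1))" by (simp add: spM)
    also have "\<dots> \<le> integral\<^sup>L (M (s j)) g"
      by (rule integral_mono[OF intI(1) integrableM(1)[OF b(1) b(2)]]) (auto intro: b(4))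
    finally show ?thesis .
  qed
  then have "c \<le> integral\<^sup>L mu g"
    by (intro LIMSEQ_le_const[OF lim[rule_format]]) (use b in auto)
  also have "\<dots> \<le> integral\<^sup>L mu (indicator (ball p R2))"
    by (rule integral_mono) (auto intro!: integrable_real_indicator integrableM b
            simp: smu finite_measure.emeasure_finite[OF fmu] less_top[symmetric])
  also have "\<dots> = measure mu (ball p R2)" by (simp add: spmu)
  finally show ?thesis .
qed

lemma weak_upper:
  assumes R: "R1 < R2" and ev: "\<And>j. j \<ge> J \<Longrightarrow> measure (M (s j)) (ball p R2) \<le> c"
  shows "measure mu (ball p R1) \<le> c"
proof -
  define g where "g = (\<lambda>y. max 0 (min 1 ((R2 - dist p y) / (R2 - R1))))"
  note b = bump[OF R g_def]
  have "integral\<^sup>L (M (s j)) g \<le> c" if "j \<ge> J" for j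
  proof -
    have "integral\<^sup>L (M (s j)) g \<le> integral\<^sup>L (M (s j)) (indicator (ball p R2))"
      by (rule integral_mono[OF integrableM(1)[OF b(1) b(2)] intI(1)]) (auto intro: b(5))
    also have "\<dots> = measure (M (s j)) (ball p R2)" by (simp add: spM)
    also have "\<dots> \<le> c" using ev that .
    finally show ?thesis .
  qed
  then have "integral\<^sup>L mu g \<le> c"
    by (intro LIMSEQ_le_const2[OF lim[rule_format]]) (use b in auto)
  moreover have "measure mu (ball p R1) \<le> integral\<^sup>L mu g"
  proof -
    have "measure mu (ball p R1) = integral\<^sup>L mu (indicator (ball p R1))" by (simp add: spmu)
    also have "\<dots> \<le> integral\<^sup>L mu g"
      by (rule integral_mono) (auto intro!: integrable_real_indicator integrableM b
            simp: smu finite_measure.emeasure_finite[OF fmu] less_top[symmetric])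
    finally show ?thesis .
  qed
  ultimately show ?thesis by linarith
qed

lemma weak_total:
  assumes "\<And>k. measure (M k) UNIV = 1"
  shows "measure mu UNIV = 1"
proof -
  have "(\<lambda>j. integral\<^sup>L (M (s j)) (\<lambda>_. 1::real)) \<longlonglongrightarrow> integral\<^sup>L mu (\<lambda>_. 1)"
    by (intro lim[rule_format]) (auto simp: bounded_iff)
  then show ?thesis using assms by (simp add: spM spmu LIMSEQ_const_iff)
qed

lemma weak_null:
  assumes X: "closed X" "X \<noteq> {}" and null: "\<And>k. measure (M k) (- X) = 0"
  shows "emeasure mu (- X) = 0"
proof -
  define g where "g \<equiv> \<lambda>y. min 1 (infdist y X)"
  have gc: "continuous_on UNIV g" unfolding g_def by (intro continuous_intros)
  have gb: "\<bar>g y\<bar> \<le> 1" for y unfolding g_def using infdist_nonneg[of y X] by auto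
  have gX: "g y \<le> indicator (- X) y" for y
    using in_closed_iff_infdist_zero[OF X, of y] unfolding g_def by (auto simp: indicator_def)
  have g0: "0 \<le> g y" for y unfolding g_def using infdist_nonneg[of y X] by auto
  have "integral\<^sup>L (M k) g = 0" for k
  proof -
    have "integral\<^sup>L (M k) g \<le> integral\<^sup>L (M k) (indicator (- X))"
      by (rule integral_mono[OF integrableM(1)[OF gc gb] intI(1)]) (auto simp: X gX)
    also have "\<dots> = 0" using null by (simp add: spM)
    finally have "integral\<^sup>L (M k) g \<le> 0" .
    moreover have "0 \<le> integral\<^sup>L (M k) g" using g0 by (simp add: Bochner_Integration.integral_nonneg)
    ultimately show ?thesis by linarith
  qed
  then have "(\<lambda>j. 0) \<longlonglongrightarrow> integral\<^sup>L mu g"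
    using lim[rule_format, of g] gc gb by (auto simp: bounded_iff)
  then have "integral\<^sup>L mu g = 0" using LIMSEQ_unique tendsto_const by blast
  then have "AE y in mu. g y = 0"
    using integral_nonneg_eq_0_iff_AE[of mu g] integrableM(2)[OF gc gb] g0 by auto
  moreover have "{y \<in> space mu. \<not> g y = 0} = - X"
    using in_closed_iff_infdist_zero[OF X] infdist_nonneg unfolding g_def spmu
    by (auto simp: min_def)
  ultimately show ?thesis
    using AE_iff_measurable[of "- X" mu "\<lambda>y. g y = 0"] X smu by auto
qed

end

locale PS =
  fixes X :: "'a::metric_space set" and a lam :: real and Xs :: "nat \<Rightarrow> 'a set" and x0 :: 'a
    and par :: "'a \<times> nat \<Rightarrow> 'a \<times> nat" and rho :: "'a \<times> nat \<Rightarrow> real"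
    and p em ep C :: real and mu :: "nat \<Rightarrow> 'a \<times> nat \<Rightarrow> real" and mm :: "'a measure"
  assumes cpt: "compact X" and dbl: "doubling X" and diam: "diameter X = 1/2"
    and hf: "hyperbolic_filling X a lam Xs x0 par"
    and pp: "0 < p"
    and h1: "H1 Xs rho em ep"
    and h2: "H2 X a lam Xs par rho"
    and h3: "H3 X a lam Xs par rho"
    and Cge: "em powr (- p) \<le> C"
    and mupos: "\<forall>k. \<forall>u\<in>level Xs k. 0 < mu k u"
    and musum: "\<forall>k. (\<Sum>u\<in>level Xs k. mu k u) = 1"
    and compat: "\<forall>k. compatible Xs par rho p C k (mu k) (mu (Suc k))"
    and bal: "\<forall>k. balanced X a lam Xs par rho p C (Suc k) (mu (Suc k))"
    and coup: "\<forall>k. coupled (tmu (level Xs k) (mu k)) (tmu (level Xs (Suc k)) (mu (Suc k)))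
                   ((1 + 2 * lam / a) * (1/a) ^ k)"
    and swl: "sub_weak_limit (\<lambda>k. tmu (level Xs k) (mu k)) mm"
begin

lemma hf_facts: "lam \<le> a" "6 \<le> lam" "Xs 0 = {x0}" "\<And>n. Xs n \<subseteq> Xs (Suc n)"
    "\<And>n. maximal_separated X (Xs n) ((1/a) ^ n)"
    "\<And>n x. x \<in> Xs (Suc n) \<Longrightarrow> fst (par (x, Suc n)) \<in> Xs n \<and> snd (par (x, Suc n)) = n \<and>
          (\<forall>z\<in>Xs n. dist x (fst (par (x, Suc n))) \<le> dist x z)"
  using hf unfolding hyperbolic_filling_def by auto

lemma a_ge: "6 \<le> a" using hf_facts by linarith
lemma b_pos: "0 < 1/a" using a_ge by simp
lemma b_le: "1/a \<le> 1/6" using a_ge by (simp add: field_simps)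
lemma bpow_pos: "0 < (1/a)^k" using b_pos by simp
lemma bpow_Suc: "(1/a)^Suc k \<le> (1/6) * (1/a)^k"
proof -
  have e: "(1/a)^Suc k = (1/a) * (1/a)^k" by (rule power_Suc)
  have "(1/a) * (1/a)^k \<le> (1/6) * (1/a)^k" by (rule mult_right_mono[OF b_le]) (use bpow_pos[of k] in simp)
  then show ?thesis unfolding e .
qed
lemma bpow_mono: "j \<le> k \<Longrightarrow> (1/a)^k \<le> (1/a)^j"
  using b_pos b_le by (intro power_decreasing) auto
lemma bpow_le1: "(1/a)^k \<le> 1" using bpow_mono[of 0 k] by simp

lemma Xs_sub: "Xs n \<subseteq> X" using hf_facts(5)[of n] unfolding maximal_separated_def by auto
lemma Xs_sep: "separated (Xs n) ((1/a)^n)" using hf_facts(5)[of n] unfolding maximal_separated_def by auto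
lemma x0X: "x0 \<in> X" using Xs_sub[of 0] hf_facts(3) by auto
lemma Xne: "X \<noteq> {}" using x0X by auto
lemma Xclosed: "closed X" using cpt by (rule compact_imp_closed)
lemma Xbounded: "bounded X" using cpt by (rule compact_imp_bounded)
lemma dist_half: "x \<in> X \<Longrightarrow> y \<in> X \<Longrightarrow> dist x y \<le> 1/2"
  using diameter_bounded_bound[OF Xbounded] diam by metis

lemma Xs_finite: "finite (Xs n)"
proof -
  have "\<not> z islimpt (Xs n)" for z
  proof
    assume "z islimpt (Xs n)"
    then have inf: "infinite (Xs n \<inter> ball z ((1/a)^n/2))"
      using islimpt_eq_infinite_ball bpow_pos by (metis half_gt_zero)
    then obtain u where u: "u \<in> Xs n \<inter> ball z ((1/a)^n/2)" by (metis finite.emptyI ex_in_conv)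
    have "infinite ((Xs n \<inter> ball z ((1/a)^n/2)) - {u})" using inf by simp
    then obtain v where v: "v \<in> (Xs n \<inter> ball z ((1/a)^n/2)) - {u}" by (metis finite.emptyI ex_in_conv)
    have "dist u v \<le> dist z u + dist z v" by (metis dist_commute dist_triangle)
    then have "dist u v < (1/a)^n" using u v by auto
    moreover have "(1/a)^n \<le> dist u v" using Xs_sep[of n] u v unfolding separated_def by auto
    ultimately show False by simp
  qed
  then have "finite (X \<inter> Xs n)" by (intro finite_not_islimpt_in_compact[OF cpt]) auto
  moreover have "X \<inter> Xs n = Xs n" using Xs_sub by auto
  ultimately show ?thesis by simp
qed

lemma cover: assumes "x \<in> X" shows "\<exists>z\<in>Xs n. dist x z < (1/a)^n"
proof (cases "x \<in> Xs n")
  case True then show ?thesis using bpow_pos[of n] by force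
next
  case False
  have "\<not> separated (insert x (Xs n)) ((1/a)^n)"
    using hf_facts(5)[of n] False assms unfolding maximal_separated_def
    by (metis insert_subset subset_insertI insertI1)
  then obtain u v where uv: "u \<in> insert x (Xs n)" "v \<in> insert x (Xs n)" "u \<noteq> v" "dist u v < (1/a)^n"
    unfolding separated_def by (auto simp: not_le)
  show ?thesis
  proof (cases "u = x")
    case True
    then have "v \<in> Xs n" using uv by auto
    then show ?thesis using uv True by (auto simp: dist_commute)
  next
    case False
    then have u: "u \<in> Xs n" using uv by auto
    show ?thesis
    proof (cases "v = x")
      case True then show ?thesis using u uv by (metis dist_commute)
    next
      case False
      then have "v \<in> Xs n" using uv by auto
      then have False using u uv Xs_sep[of n] unfolding separated_def by (metis not_le)
      then show ?thesis ..
    qed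
  qed
qed

lemma level_iff: "v \<in> level Xs k \<longleftrightarrow> snd v = k \<and> fst v \<in> Xs k"
  unfolding level_def by (cases v) auto
lemma verts_iff: "v \<in> verts Xs \<longleftrightarrow> fst v \<in> Xs (snd v)"
  unfolding verts_def by (cases v) auto
lemma level_verts: "v \<in> level Xs k \<Longrightarrow> v \<in> verts Xs"
  by (simp add: level_iff verts_iff)
lemma level_finite: "finite (level Xs k)"
proof -
  have "level Xs k = (\<lambda>x. (x, k)) ` Xs k" unfolding level_def by auto
  then show ?thesis using Xs_finite by simp
qed
lemma level_X: "v \<in> level Xs k \<Longrightarrow> fst v \<in> X" using Xs_sub by (auto simp: level_iff)
lemma level0: "level Xs 0 = {(x0, 0)}" using hf_facts(3) unfolding level_def by auto

lemma par_level: assumes "v \<in> level Xs (Suc k)"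
  shows "par v \<in> level Xs k" "dist (fst v) (fst (par v)) < (1/a)^k"
proof -
  obtain x where v: "v = (x, Suc k)" "x \<in> Xs (Suc k)" using assms by (cases v) (auto simp: level_iff)
  note pf = hf_facts(6)[OF v(2)]
  show "par v \<in> level Xs k" using pf v by (auto simp: level_iff)
  obtain z where z: "z \<in> Xs k" "dist x z < (1/a)^k" using cover[of x k] v Xs_sub by auto
  show "dist (fst v) (fst (par v)) < (1/a)^k" using pf z v by force
qed

lemma par_iter: assumes "v \<in> level Xs k" "i \<le> k"
  shows "(par ^^ i) v \<in> level Xs (k - i) \<and> dist (fst v) (fst ((par ^^ i) v)) \<le> (6/5) * (1/a)^(k-i)"
  using assms(2)
proof (induction i)
  case 0 then show ?case using assms(1) bpow_pos[of k] by simp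
next
  case (Suc i)
  then have IH: "(par ^^ i) v \<in> level Xs (Suc (k - Suc i))"
      "dist (fst v) (fst ((par ^^ i) v)) \<le> (6/5) * (1/a)^(Suc (k - Suc i))"
    by (simp_all add: Suc_diff_Suc)
  note pl = par_level[OF IH(1)]
  have "dist (fst v) (fst ((par ^^ Suc i) v)) \<le> dist (fst v) (fst ((par ^^ i) v)) + dist (fst ((par ^^ i) v)) (fst ((par ^^ Suc i) v))"
    by (rule dist_triangle)
  also have "\<dots> \<le> (6/5) * (1/a)^(Suc (k - Suc i)) + (1/a)^(k - Suc i)"
    using IH(2) pl(2) by simp
  also have "\<dots> \<le> (6/5) * (1/a)^(k - Suc i)"
    using bpow_Suc[of "k - Suc i"] by linarith
  finally show ?case using pl(1) by simp
qed

end

context PS begin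

lemma h1f: "0 < em" "ep < 1" "\<And>v. v \<in> verts Xs \<Longrightarrow> em \<le> rho v \<and> rho v \<le> ep"
  using h1 unfolding H1_def by auto

lemma em_le_ep: "em \<le> ep"
proof -
  have "(x0, 0) \<in> verts Xs" using hf_facts(3) by (simp add: verts_iff)
  then show ?thesis using h1f(3) by force
qed

lemma rho_pos: "v \<in> verts Xs \<Longrightarrow> 0 < rho v" using h1f by (meson less_le_trans)
lemma rho_le1: "v \<in> verts Xs \<Longrightarrow> rho v \<le> 1" using h1f(2) h1f(3)[of v] by linarith

abbreviation "pw \<equiv> piw par rho"

lemma iter_verts: "v \<in> verts Xs \<Longrightarrow> i \<le> snd v \<Longrightarrow> (par ^^ i) v \<in> verts Xs"
  using par_iter[of v "snd v" i] by (auto simp: level_iff verts_iff)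

lemma pw_pos: "v \<in> verts Xs \<Longrightarrow> 0 < pw v"
  unfolding piw_def by (intro prod_pos) (auto intro: rho_pos iter_verts)

lemma pw_par: assumes "v \<in> level Xs (Suc k)" shows "pw v = rho v * pw (par v)"
proof -
  have s: "snd v = Suc k" "snd (par v) = k" using assms par_level(1)[OF assms] by (auto simp: level_iff)
  have "pw v = (\<Prod>i\<in>{0..Suc k}. rho ((par ^^ i) v))" unfolding piw_def s ..
  also have "\<dots> = rho v * (\<Prod>i\<in>{0..k}. rho ((par ^^ Suc i) v))"
    by (subst prod.atLeast0_atMost_Suc_shift) (simp add: comp_def)
  also have "(\<Prod>i\<in>{0..k}. rho ((par ^^ Suc i) v)) = pw (par v)"
    unfolding piw_def s by (simp add: funpow_Suc_right del: funpow.simps)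
  finally show ?thesis .
qed

lemma pw_le_par: assumes "v \<in> level Xs (Suc k)" shows "pw v \<le> pw (par v)"
proof -
  have "par v \<in> verts Xs" using par_level(1)[OF assms] level_verts by blast
  then show ?thesis using pw_par[OF assms] rho_le1[OF level_verts[OF assms]] pw_pos
    by (simp add: mult_left_le_one_le)
qed

lemma pw_par_ge: assumes "v \<in> level Xs (Suc k)" shows "em * pw (par v) \<le> pw v"
proof -
  have "par v \<in> verts Xs" using par_level(1)[OF assms] level_verts by blast
  then show ?thesis using pw_par[OF assms] h1f(3)[OF level_verts[OF assms]] pw_pos
    by (simp add: mult_right_mono)
qed

lemma pw_par_ep: assumes "v \<in> level Xs (Suc k)" shows "pw v \<le> ep * pw (par v)"
proof -
  have "par v \<in> verts Xs" using par_level(1)[OF assms] level_verts by blast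
  then show ?thesis using pw_par[OF assms] h1f(3)[OF level_verts[OF assms]] pw_pos
    by (simp add: mult_right_mono)
qed

lemma pw_geom: assumes "v \<in> level Xs k" "d \<le> k"
  shows "pw v \<le> ep ^ d * pw ((par ^^ d) v)"
  using assms(2)
proof (induction d)
  case 0 then show ?case by simp
next
  case (Suc d)
  have l: "(par ^^ d) v \<in> level Xs (Suc (k - Suc d))"
    using par_iter[OF assms(1), of d] Suc.prems by (simp add: Suc_diff_Suc)
  have "pw ((par ^^ d) v) \<le> ep * pw ((par ^^ Suc d) v)"
    using pw_par_ep[OF l] by simp
  then have "ep ^ d * pw ((par ^^ d) v) \<le> ep ^ d * (ep * pw ((par ^^ Suc d) v))"
    using h1f em_le_ep by (intro mult_left_mono) auto
  moreover have "pw v \<le> ep ^ d * pw ((par ^^ d) v)" using Suc by simp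
  moreover have "ep ^ d * (ep * pw ((par ^^ Suc d) v)) = ep ^ Suc d * pw ((par ^^ Suc d) v)" by simp
  ultimately show ?case by linarith
qed

lemma pw_anc: assumes "v \<in> level Xs k" "d \<le> k" shows "pw v \<le> pw ((par ^^ d) v)"
proof -
  have "(par ^^ d) v \<in> verts Xs" using par_iter[OF assms] level_verts by blast
  then have "0 < pw ((par ^^ d) v)" by (rule pw_pos)
  moreover have "ep ^ d \<le> 1" using h1f em_le_ep by (intro power_le_one) auto
  ultimately have "ep ^ d * pw ((par ^^ d) v) \<le> pw ((par ^^ d) v)"
    using mult_right_mono[of "ep ^ d" 1 "pw ((par ^^ d) v)"] by simp
  then show ?thesis using pw_geom[OF assms] by linarith
qed

lemma pw_le_pow: "v \<in> level Xs k \<Longrightarrow> pw v \<le> ep ^ Suc k"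
proof (induction k arbitrary: v)
  case 0
  then have "v = (x0, 0)" using level0 by auto
  then show ?case using h1f(3)[of v] hf_facts(3) by (simp add: piw_def verts_iff)
next
  case (Suc k)
  have "pw v \<le> ep * pw (par v)" by (rule pw_par_ep[OF Suc.prems])
  also have "\<dots> \<le> ep * ep ^ Suc k"
    using Suc.IH[OF par_level(1)[OF Suc.prems]] h1f em_le_ep by (intro mult_left_mono) auto
  finally show ?case by simp
qed

lemma hadj_sym: "hadj X a lam Xs u v \<Longrightarrow> hadj X a lam Xs v u"
  unfolding hadj_def by auto

lemma adj_sym: "adj X a lam Xs par u v \<Longrightarrow> adj X a lam Xs par v u"
  unfolding adj_def using hadj_sym by blast

lemma near_hadj:
  assumes "u \<in> level Xs k" "v \<in> level Xs k" "x \<in> X"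
    "dist (fst u) x < 6 * (1/a)^k" "dist (fst v) x < 6 * (1/a)^k"
  shows "u = v \<or> hadj X a lam Xs u v"
proof -
  have l: "6 * (1/a)^k \<le> lam * (1/a)^k" using hf_facts(2) bpow_pos[of k] by (simp add: mult_right_mono)
  have "x \<in> Xball X (fst u) (lam * (1/a) ^ snd u) \<inter> Xball X (fst v) (lam * (1/a) ^ snd v)"
    using assms l by (auto simp: Xball_def level_iff)
  then show ?thesis using assms(1,2) level_verts unfolding hadj_def by (auto simp: level_iff)
qed

definition K0 where "K0 = (SOME K0. \<forall>u v. hadj X a lam Xs u v \<longrightarrow> pw u \<le> K0 * pw v)"
definition K where "K = max K0 1"

lemma K_ge1: "1 \<le> K" unfolding K_def by simp

lemma K_hadj: assumes "hadj X a lam Xs u v" shows "pw u \<le> K * pw v"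
proof -
  have "\<forall>u v. hadj X a lam Xs u v \<longrightarrow> pw u \<le> K0 * pw v"
    unfolding K0_def using h2 unfolding H2_def by (rule someI_ex)
  then have "pw u \<le> K0 * pw v" using assms by blast
  moreover have "0 < pw v" using assms unfolding hadj_def by (auto intro: pw_pos)
  moreover have "K0 * pw v \<le> K * pw v" by (rule mult_right_mono) (use \<open>0 < pw v\<close> in \<open>auto simp: K_def\<close>)
  ultimately show ?thesis by linarith
qed

lemma K_near: assumes "u = v \<or> hadj X a lam Xs u v" "v \<in> verts Xs" shows "pw u \<le> K * pw v"
proof (cases "u = v")
  case True then show ?thesis using K_ge1 pw_pos[OF assms(2)] by (simp add: mult_le_cancel_right1)
next
  case False then show ?thesis using assms(1) K_hadj by blast
qed

definition vx where "vx x j = (SOME v. v \<in> level Xs j \<and> dist (fst v) x < (1/a)^j)"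

lemma vx: assumes "x \<in> X" shows "vx x j \<in> level Xs j" "dist (fst (vx x j)) x < (1/a)^j"
proof -
  obtain z where "z \<in> Xs j" "dist x z < (1/a)^j" using cover[OF assms] by blast
  then have "\<exists>v. v \<in> level Xs j \<and> dist (fst v) x < (1/a)^j"
    by (intro exI[of _ "(z, j)"]) (auto simp: level_iff dist_commute)
  then have "vx x j \<in> level Xs j \<and> dist (fst (vx x j)) x < (1/a)^j"
    unfolding vx_def by (rule someI_ex)
  then show "vx x j \<in> level Xs j" "dist (fst (vx x j)) x < (1/a)^j" by auto
qed

definition q where "q x j = pw (vx x j)"

lemma q_pos: "x \<in> X \<Longrightarrow> 0 < q x j"
  unfolding q_def using vx(1) level_verts pw_pos by blast

lemma anc_near:
  assumes "x \<in> X" "w \<in> level Xs k" "dist (fst w) x < c * (1/a)^k" "j \<le> k" "0 \<le> c"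
  shows "dist (fst ((par ^^ (k - j)) w)) x < (6/5 + c) * (1/a)^j"
proof -
  have "dist (fst w) (fst ((par ^^ (k - j)) w)) \<le> (6/5) * (1/a)^j"
    using par_iter[OF assms(2), of "k - j"] assms(4) by simp
  moreover have "c * (1/a)^k \<le> c * (1/a)^j" using bpow_mono[OF assms(4)] assms(5) by (simp add: mult_left_mono)
  moreover have "dist (fst ((par ^^ (k - j)) w)) x \<le> dist (fst w) (fst ((par ^^ (k - j)) w)) + dist (fst w) x"
    by (metis dist_commute dist_triangle)
  ultimately show ?thesis using assms(3) by (simp add: algebra_simps)
qed

lemma Q1: assumes "x \<in> X" "j \<le> k" shows "q x k \<le> K * q x j"
proof -
  define A where "A = (par ^^ (k - j)) (vx x k)"
  have Al: "A \<in> level Xs j" using par_iter[OF vx(1)[OF assms(1), of k], of "k - j"] assms(2) by (simp add: A_def)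
  have "dist (fst A) x < (6/5 + 1) * (1/a)^j"
    unfolding A_def by (rule anc_near[OF assms(1) vx(1)[OF assms(1)] _ assms(2)]) (use vx(2)[OF assms(1)] in auto)
  moreover have "(6/5 + 1) * (1/a)^j \<le> 6 * (1/a)^j" using bpow_pos[of j] by simp
  moreover have "dist (fst (vx x j)) x < 6 * (1/a)^j" using vx(2)[OF assms(1), of j] bpow_pos[of j] by simp
  ultimately have "A = vx x j \<or> hadj X a lam Xs A (vx x j)"
    using near_hadj[OF Al vx(1)[OF assms(1)] assms(1)] by simp
  then have "pw A \<le> K * q x j" unfolding q_def using K_near level_verts vx(1)[OF assms(1)] by blast
  moreover have "q x k \<le> pw A" unfolding q_def A_def using pw_anc[OF vx(1)[OF assms(1)], of "k - j"] by simp
  ultimately show ?thesis by simp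
qed

lemma Q2: assumes "x \<in> X" shows "(em / K) * q x j \<le> q x (Suc j)"
proof -
  define A where "A = par (vx x (Suc j))"
  have Al: "A \<in> level Xs j" using par_level(1)[OF vx(1)[OF assms]] by (simp add: A_def)
  have "dist (fst A) x < (6/5 + 1) * (1/a)^j"
    using anc_near[OF assms vx(1)[OF assms, of "Suc j"], of 1 j] vx(2)[OF assms, of "Suc j"]
    by (simp add: A_def)
  moreover have "(6/5 + 1) * (1/a)^j \<le> 6 * (1/a)^j" using bpow_pos[of j] by simp
  moreover have "dist (fst (vx x j)) x < 6 * (1/a)^j" using vx(2)[OF assms, of j] bpow_pos[of j] by simp
  ultimately have "vx x j = A \<or> hadj X a lam Xs (vx x j) A"
    using near_hadj[OF vx(1)[OF assms] Al assms] by simp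
  then have "q x j \<le> K * pw A" unfolding q_def using K_near level_verts Al by blast
  moreover have "em * pw A \<le> q x (Suc j)" unfolding q_def A_def by (rule pw_par_ge[OF vx(1)[OF assms]])
  moreover have "0 < em" using h1f by simp
  ultimately have "em * q x j \<le> em * (K * pw A)" by (intro mult_left_mono) auto
  also have "\<dots> = K * (em * pw A)" by (simp add: algebra_simps)
  also have "\<dots> \<le> K * q x (Suc j)" using \<open>em * pw A \<le> q x (Suc j)\<close> K_ge1 by (intro mult_left_mono) auto
  finally have "em * q x j \<le> K * q x (Suc j)" .
  have "em / K * q x j = (em * q x j) / K" by simp
  also have "\<dots> \<le> q x (Suc j)" using \<open>em * q x j \<le> K * q x (Suc j)\<close> K_ge1
    by (simp add: divide_le_eq mult.commute)
  finally show ?thesis .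
qed

lemma Q3: "x \<in> X \<Longrightarrow> q x j \<le> ep ^ Suc j"
  unfolding q_def using pw_le_pow vx(1) by blast

lemma q_small: assumes "x \<in> X" "0 < e" shows "\<exists>j. K^2 * q x j < e"
proof -
  have "0 < e / K^2" using assms K_ge1 by simp
  then obtain n where n: "ep ^ n < e / K^2" using real_arch_pow_inv h1f(2) by blast
  have "q x n \<le> ep ^ Suc n" by (rule Q3[OF assms(1)])
  also have "\<dots> \<le> ep ^ n" using h1f em_le_ep by (intro power_decreasing) auto
  finally have "q x n < e / K^2" using n by linarith
  then have "K^2 * q x n < e" using K_ge1 by (simp add: less_divide_eq mult.commute)
  then show ?thesis by blast
qed

end

definition csum :: "('b \<Rightarrow> 'b \<Rightarrow> 'c::comm_monoid_add) \<Rightarrow> 'b list \<Rightarrow> 'c" where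
  "csum f xs = (\<Sum>i<length xs - 1. f (xs ! i) (xs ! Suc i))"

lemma csum_Nil[simp]: "csum f [] = 0" by (simp add: csum_def)
lemma csum_single[simp]: "csum f [x] = 0" by (simp add: csum_def)
lemma csum_Cons2[simp]: "csum f (x # y # zs) = f x y + csum f (y # zs)"
  unfolding csum_def by (simp add: sum.lessThan_Suc_shift del: sum.lessThan_Suc)

lemma csum_append:
  assumes "xs \<noteq> []" "ys \<noteq> []" "last xs = hd ys"
  shows "csum f (xs @ tl ys) = csum f xs + csum f ys"
  using assms
proof (induction xs rule: induct_list012)
  case (2 x) then show ?case by (cases ys) auto
next
  case (3 x y zs) then show ?case by (simp add: add.assoc)
qed simp

lemma csum_snoc: "xs \<noteq> [] \<Longrightarrow> csum f (xs @ [z]) = csum f xs + f (last xs) z"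
  using csum_append[of xs "[last xs, z]" f] by simp

lemma csum_rev: "csum f (rev xs) = csum (\<lambda>u v. f v u) xs"
proof (induction xs rule: induct_list012)
  case (3 x y zs)
  have "csum f (rev (x # y # zs)) = csum f (rev (y # zs) @ [x])" by simp
  also have "\<dots> = csum f (rev (y # zs)) + f y x" by (subst csum_snoc) (auto simp: last_rev)
  finally show ?case using 3 by (simp add: add.commute)
qed auto

lemma csum_nonneg: "(\<And>u v. u \<in> set xs \<Longrightarrow> v \<in> set xs \<Longrightarrow> u \<noteq> v \<Longrightarrow> 0 \<le> f u v) \<Longrightarrow>
   successively (\<noteq>) xs \<Longrightarrow> (0::real) \<le> csum f xs"
proof (induction xs rule: induct_list012)
  case (3 x y zs)
  then show ?case by (simp add: add_nonneg_nonneg)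
qed auto

context PS begin

abbreviation "CT \<equiv> ctop X a Xs"
abbreviation "CS \<equiv> cset X a Xs"
abbreviation "PC \<equiv> piC X a Xs par rho"
abbreviation "TH \<equiv> Theta X a Xs par rho"

lemma ctop_facts:
  assumes xy: "x \<in> X" "y \<in> X" "x \<noteq> y"
  shows "\<exists>z\<in>Xs (CT x y). x \<in> Xball X z (2*(1/a)^CT x y) \<and> y \<in> Xball X z (2*(1/a)^CT x y)"
    and "\<And>n. (\<exists>z\<in>Xs n. x \<in> Xball X z (2*(1/a)^n) \<and> y \<in> Xball X z (2*(1/a)^n)) \<Longrightarrow> n \<le> CT x y"
proof -
  define P where "P n \<longleftrightarrow> (\<exists>z\<in>Xs n. x \<in> Xball X z (2*(1/a)^n) \<and> y \<in> Xball X z (2*(1/a)^n))" for n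
  have ct: "CT x y = (GREATEST n. P n)" unfolding ctop_def P_def ..
  have P0: "P 0" unfolding P_def using hf_facts(3) dist_half[OF x0X xy(1)] dist_half[OF x0X xy(2)] xy
    by (auto simp: Xball_def)
  have dpos: "0 < dist x y / 4" using xy by simp
  obtain N where N: "(1/a)^N < dist x y / 4" using real_arch_pow_inv[OF dpos, of "1/a"] b_le by auto
  have bnd: "n \<le> N" if Pn: "P n" for n
  proof (rule ccontr)
    assume "\<not> n \<le> N"
    then have "(1/a)^n \<le> (1/a)^N" using bpow_mono by simp
    obtain z where "x \<in> Xball X z (2*(1/a)^n)" "y \<in> Xball X z (2*(1/a)^n)" using Pn unfolding P_def by blast
    then have "dist z x < 2*(1/a)^n" "dist z y < 2*(1/a)^n" by (auto simp: Xball_def)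
    moreover have "dist x y \<le> dist z x + dist z y" by (metis dist_commute dist_triangle)
    ultimately show False using N \<open>(1/a)^n \<le> (1/a)^N\<close> by linarith
  qed
  show "\<exists>z\<in>Xs (CT x y). x \<in> Xball X z (2*(1/a)^CT x y) \<and> y \<in> Xball X z (2*(1/a)^CT x y)"
    using GreatestI_nat[of P 0 N, OF P0 bnd] unfolding ct P_def by blast
  show "n \<le> CT x y" if "\<exists>z\<in>Xs n. x \<in> Xball X z (2*(1/a)^n) \<and> y \<in> Xball X z (2*(1/a)^n)" for n
    using Greatest_le_nat[of P n N] that bnd unfolding ct P_def by blast
qed

lemma ctop_dist: assumes "x \<in> X" "y \<in> X" "x \<noteq> y" shows "dist x y < 4*(1/a)^CT x y"
proof -
  obtain z where "x \<in> Xball X z (2*(1/a)^CT x y)" "y \<in> Xball X z (2*(1/a)^CT x y)"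
    using ctop_facts(1)[OF assms] by blast
  then have "dist z x < 2*(1/a)^CT x y" "dist z y < 2*(1/a)^CT x y" by (auto simp: Xball_def)
  moreover have "dist x y \<le> dist z x + dist z y" by (metis dist_commute dist_triangle)
  ultimately show ?thesis by linarith
qed

lemma ctop_ge: assumes "x \<in> X" "y \<in> X" "x \<noteq> y" "dist x y < (1/a)^j" shows "j \<le> CT x y"
proof (rule ctop_facts(2)[OF assms(1-3)])
  have d1: "dist (fst (vx x j)) x < (1/a)^j" by (rule vx(2)[OF assms(1)])
  have "dist (fst (vx x j)) y \<le> dist (fst (vx x j)) x + dist x y" by (rule dist_triangle)
  then have d2: "dist (fst (vx x j)) y < 2*(1/a)^j" using d1 assms(4) by linarith
  have "fst (vx x j) \<in> Xs j" using vx(1)[OF assms(1), of j] by (simp add: level_iff)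
  then show "\<exists>z\<in>Xs j. x \<in> Xball X z (2*(1/a)^j) \<and> y \<in> Xball X z (2*(1/a)^j)"
    using d1 d2 assms(1,2) bpow_pos[of j] by (intro bexI[of _ "fst (vx x j)"]) (auto simp: Xball_def)
qed

lemma ctop_sym: "CT x y = CT y x" unfolding ctop_def by (simp add: conj_commute)
lemma cset_sym: "CS x y = CS y x" unfolding cset_def by (auto simp: ctop_sym)
lemma piC_sym: "PC x y = PC y x" unfolding piC_def by (simp add: cset_sym)

lemma cset_level: "w \<in> CS x y \<Longrightarrow> w \<in> level Xs (CT x y)"
  unfolding cset_def by (auto simp: level_iff verts_iff)

lemma cset_near: "w \<in> CS x y \<Longrightarrow> dist (fst w) x < 2*(1/a)^CT x y \<and> dist (fst w) y < 2*(1/a)^CT x y"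
  unfolding cset_def by (auto simp: Xball_def)

lemma cset_fin: "finite (CS x y)"
  using level_finite[of "CT x y"] cset_level by (meson finite_subset subsetI)

lemma cset_ne: assumes "x \<in> X" "y \<in> X" "x \<noteq> y" shows "CS x y \<noteq> {}"
proof -
  obtain z where z: "z \<in> Xs (CT x y)" "x \<in> Xball X z (2*(1/a)^CT x y)" "y \<in> Xball X z (2*(1/a)^CT x y)"
    using ctop_facts(1)[OF assms] by blast
  then have "(z, CT x y) \<in> CS x y" unfolding cset_def by (auto simp: verts_iff)
  then show ?thesis by blast
qed

lemma piC_ge: "w \<in> CS x y \<Longrightarrow> pw w \<le> PC x y"
  unfolding piC_def using cset_fin by (intro Max_ge) auto

lemma piC_in: assumes "x \<in> X" "y \<in> X" "x \<noteq> y" shows "\<exists>w\<in>CS x y. PC x y = pw w"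
proof -
  have "PC x y \<in> pw ` CS x y" unfolding piC_def using cset_fin cset_ne[OF assms] by (intro Max_in) auto
  then show ?thesis by auto
qed

lemma piC_pos: assumes "x \<in> X" "y \<in> X" "x \<noteq> y" shows "0 < PC x y"
  using piC_in[OF assms] cset_level pw_pos level_verts by metis

lemma C4: assumes "x \<in> X" "y \<in> X" "x \<noteq> y" shows "PC x y \<le> K * q x (CT x y)"
proof -
  obtain w where w: "w \<in> CS x y" "PC x y = pw w" using piC_in[OF assms] by blast
  have "dist (fst w) x < 6*(1/a)^CT x y" using cset_near[OF w(1)] bpow_pos[of "CT x y"] by linarith
  moreover have "dist (fst (vx x (CT x y))) x < 6*(1/a)^CT x y" using vx(2)[OF assms(1)] bpow_pos[of "CT x y"]
    by (smt (verit))
  ultimately have "w = vx x (CT x y) \<or> hadj X a lam Xs w (vx x (CT x y))"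
    using near_hadj[OF cset_level[OF w(1)] vx(1)[OF assms(1)] assms(1)] by blast
  then show ?thesis unfolding q_def w(2) using K_near vx(1)[OF assms(1)] level_verts by blast
qed

lemma C5: assumes "x \<in> X" "y \<in> X" "x \<noteq> y" shows "q x (CT x y) \<le> K * PC x y"
proof -
  obtain w where w: "w \<in> CS x y" "PC x y = pw w" using piC_in[OF assms] by blast
  have "dist (fst w) x < 6*(1/a)^CT x y" using cset_near[OF w(1)] bpow_pos[of "CT x y"] by linarith
  moreover have "dist (fst (vx x (CT x y))) x < 6*(1/a)^CT x y" using vx(2)[OF assms(1)] bpow_pos[of "CT x y"]
    by (smt (verit))
  ultimately have "vx x (CT x y) = w \<or> hadj X a lam Xs (vx x (CT x y)) w"
    using near_hadj[OF vx(1)[OF assms(1)] cset_level[OF w(1)] assms(1)] by blast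
  then show ?thesis unfolding q_def w(2) using K_near cset_level[OF w(1)] level_verts by blast
qed

definition chn where "chn x y xs \<longleftrightarrow> 2 \<le> length xs \<and> hd xs = x \<and> last xs = y \<and> set xs \<subseteq> X \<and>
   (\<forall>i. Suc i < length xs \<longrightarrow> xs ! i \<noteq> xs ! Suc i)"

definition TS where "TS x y = {csum PC xs | xs. chn x y xs}"

lemma Theta_eq: "x \<noteq> y \<Longrightarrow> TH x y = Inf (TS x y)"
  unfolding Theta_def TS_def chn_def csum_def by simp

lemma chn_succ: "chn x y xs \<Longrightarrow> successively (\<noteq>) xs"
  unfolding chn_def successively_conv_nth by blast

lemma TS_nonneg: assumes "t \<in> TS x y" shows "0 \<le> t"
proof -
  obtain xs where xs: "t = csum PC xs" "chn x y xs" using assms unfolding TS_def by blast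
  have "set xs \<subseteq> X" using xs(2) unfolding chn_def by blast
  then show ?thesis unfolding xs(1)
    by (intro csum_nonneg chn_succ[OF xs(2)]) (auto intro: less_imp_le piC_pos)
qed

lemma TS_bdd: "bdd_below (TS x y)"
  using TS_nonneg by (intro bdd_belowI[of _ 0]) auto

lemma chn_two: "x \<in> X \<Longrightarrow> y \<in> X \<Longrightarrow> x \<noteq> y \<Longrightarrow> chn x y [x, y]"
  unfolding chn_def by (auto simp: nth_Cons split: nat.splits)

lemma TS_two: "x \<in> X \<Longrightarrow> y \<in> X \<Longrightarrow> x \<noteq> y \<Longrightarrow> PC x y \<in> TS x y"
  unfolding TS_def using chn_two by (intro CollectI exI[of _ "[x,y]"]) auto

lemma T1: assumes "x \<in> X" "y \<in> X" "x \<noteq> y" shows "TH x y \<le> PC x y"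
  unfolding Theta_eq[OF assms(3)] by (rule cInf_lower[OF TS_two[OF assms] TS_bdd])

lemma T2: assumes "x \<in> X" "y \<in> X" shows "0 \<le> TH x y"
proof (cases "x = y")
  case True then show ?thesis by (simp add: Theta_def)
next
  case False
  have ne: "TS x y \<noteq> {}" using TS_two[OF assms False] by blast
  show ?thesis unfolding Theta_eq[OF False] by (rule cInf_greatest[OF ne]) (rule TS_nonneg)
qed

lemma chn_rev: "chn x y xs \<Longrightarrow> chn y x (rev xs)"
proof -
  assume c: "chn x y xs"
  then have "successively (\<noteq>) (rev xs)" using chn_succ[OF c] by (simp add: successively_rev)
      (metis (mono_tags, lifting) successively_mono)
  then show ?thesis using c unfolding chn_def successively_conv_nth
    by (auto simp: hd_rev last_rev)
qed

lemma TS_sym_sub: "TS y x \<subseteq> TS x y"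
proof
  fix t assume "t \<in> TS y x"
  then obtain xs where xs: "t = csum PC xs" "chn y x xs" unfolding TS_def by blast
  have "csum PC (rev xs) = csum PC xs" by (simp add: csum_rev piC_sym)
  then show "t \<in> TS x y" unfolding TS_def using chn_rev[OF xs(2)] xs(1)
    by (intro CollectI exI[of _ "rev xs"]) simp
qed

lemma TH_sym: "TH x y = TH y x"
proof (cases "x = y")
  case True then show ?thesis by simp
next
  case False
  have "TS x y = TS y x" using TS_sym_sub by blast
  then show ?thesis using Theta_eq False by metis
qed

lemma chn_append: assumes "chn x y xs" "chn y z ys" "x \<noteq> z"
  shows "chn x z (xs @ tl ys)"
proof -
  obtain y' ys' where ys: "ys = y' # ys'" using assms(2) unfolding chn_def by (cases ys) auto
  have ys'ne: "ys' \<noteq> []" using assms(2) ys unfolding chn_def by auto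
  have xsne: "xs \<noteq> []" using assms(1) unfolding chn_def by auto
  have y': "y' = y" using assms(2) ys unfolding chn_def by auto
  have s1: "successively (\<noteq>) xs" by (rule chn_succ[OF assms(1)])
  have s2: "successively (\<noteq>) ys" by (rule chn_succ[OF assms(2)])
  then have s2': "successively (\<noteq>) ys'" "y \<noteq> hd ys'" using ys'ne by (auto simp: ys y' successively_Cons)
  have "successively (\<noteq>) (xs @ ys')"
    using s1 s2' assms(1) xsne ys'ne unfolding chn_def by (auto simp: successively_append_iff)
  moreover have "hd (xs @ ys') = x" "last (xs @ ys') = z"
    using assms xsne ys'ne ys unfolding chn_def by auto
  moreover have "set (xs @ ys') \<subseteq> X" using assms ys unfolding chn_def by auto
  moreover have "2 \<le> length (xs @ ys')"
    using assms(1) ys'ne unfolding chn_def by auto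
  ultimately show ?thesis unfolding chn_def ys successively_conv_nth by simp
qed

lemma T4: assumes "x \<in> X" "y \<in> X" "z \<in> X" shows "TH x z \<le> TH x y + TH y z"
proof (cases "x = z")
  case True then show ?thesis using T2[OF assms(1,2)] T2[OF assms(2,3)] by (simp add: Theta_def)
next
  case xz: False
  show ?thesis
  proof (cases "x = y \<or> y = z")
    case True then show ?thesis by (auto simp: Theta_def)
  next
    case False
    then have xy: "x \<noteq> y" and yz: "y \<noteq> z" by auto
    have ne1: "TS x y \<noteq> {}" using TS_two[OF assms(1,2) xy] by blast
    have ne2: "TS y z \<noteq> {}" using TS_two[OF assms(2,3) yz] by blast
    have key: "Inf (TS x z) \<le> s + t" if st: "s \<in> TS x y" "t \<in> TS y z" for s t
    proof -
      obtain xs where xs: "s = csum PC xs" "chn x y xs" using st(1) unfolding TS_def by blast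
      obtain ys where ys: "t = csum PC ys" "chn y z ys" using st(2) unfolding TS_def by blast
      have "csum PC (xs @ tl ys) = s + t" using xs ys unfolding chn_def
        by (subst csum_append) auto
      then have "s + t \<in> TS x z" unfolding TS_def using chn_append[OF xs(2) ys(2) xz]
        by (intro CollectI exI[of _ "xs @ tl ys"]) simp
      then show ?thesis by (rule cInf_lower[OF _ TS_bdd])
    qed
    have "Inf (TS x z) - t \<le> Inf (TS x y)" if "t \<in> TS y z" for t
      using key[OF _ that] by (intro cInf_greatest[OF ne1]) (simp add: algebra_simps)
    then have "Inf (TS x z) - Inf (TS x y) \<le> Inf (TS y z)"
      by (intro cInf_greatest[OF ne2]) (simp add: algebra_simps)
    then show ?thesis using Theta_eq xy yz xz by simp
  qed
qed

lemma TU: assumes "x \<in> X" "y \<in> X" "dist x y < (1/a)^j" shows "TH x y \<le> K^2 * q x j"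
proof (cases "x = y")
  case True then show ?thesis using q_pos[OF assms(1), of j] by (simp add: Theta_def less_imp_le)
next
  case False
  have j: "j \<le> CT x y" by (rule ctop_ge[OF assms(1,2) False assms(3)])
  have "TH x y \<le> PC x y" by (rule T1[OF assms(1,2) False])
  also have "\<dots> \<le> K * q x (CT x y)" by (rule C4[OF assms(1,2) False])
  also have "\<dots> \<le> K * (K * q x j)" using Q1[OF assms(1) j] K_ge1 by (intro mult_left_mono) auto
  finally show ?thesis by (simp add: power2_eq_square mult.assoc)
qed

end

fun bpg :: "('b \<Rightarrow> 'b \<Rightarrow> 'c list) \<Rightarrow> 'b list \<Rightarrow> 'c list" where
  "bpg P (x # y # zs) = P x y @ bpg P (y # zs)"
| "bpg P _ = []"

lemma sum_remdups_adj:
  fixes f :: "'b \<Rightarrow> real"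
  shows "(\<And>x. x \<in> set xs \<Longrightarrow> 0 \<le> f x) \<Longrightarrow> sum_list (map f (remdups_adj xs)) \<le> sum_list (map f xs)"
proof (induction xs rule: remdups_adj.induct)
  case (3 x y xs)
  show ?case
  proof (cases "x = y")
    case True
    then have "sum_list (map f (remdups_adj (x # xs))) \<le> sum_list (map f (x # xs))"
      using 3 by auto
    then show ?thesis using True 3(3)[of y] by simp
  next
    case False
    then show ?thesis using 3 by auto
  qed
qed auto

context PS begin

abbreviation "ADJ \<equiv> adj X a lam Xs par"

definition up :: "'a \<times> nat \<Rightarrow> nat \<Rightarrow> ('a \<times> nat) list" where
  "up w d = map (\<lambda>i. (par ^^ i) w) [0..<Suc d]"

lemma up_basic: "up w d \<noteq> []" "hd (up w d) = w" "last (up w d) = (par ^^ d) w"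
  unfolding up_def by (auto simp: hd_map last_map simp del: upt_Suc)

lemma up_Suc: "up w (Suc d) = up w d @ [(par ^^ Suc d) w]"
  unfolding up_def by simp

lemma up_set: assumes "w \<in> level Xs k" "d \<le> k" shows "set (up w d) \<subseteq> verts Xs"
proof
  fix v assume "v \<in> set (up w d)"
  then obtain i where i: "i \<le> d" "v = (par ^^ i) w" unfolding up_def by (auto simp del: upt_Suc simp: less_Suc_eq_le)
  have "(par ^^ i) w \<in> level Xs (k - i)" using par_iter[OF assms(1), of i] i(1) assms(2) by simp
  then show "v \<in> verts Xs" using level_verts i(2) by blast
qed

lemma up_succ: assumes "w \<in> level Xs k" "d \<le> k" shows "successively ADJ (up w d)"
  unfolding successively_conv_nth
proof (intro allI impI)
  fix i assume i: "Suc i < length (up w d)"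
  then have id: "i < d" unfolding up_def by simp
  have l: "(par ^^ i) w \<in> level Xs (Suc (k - Suc i))"
    using par_iter[OF assms(1), of i] id assms(2) by (simp add: Suc_diff_Suc)
  have l2: "(par ^^ Suc i) w \<in> level Xs (k - Suc i)"
    using par_iter[OF assms(1), of "Suc i"] id assms(2) by simp
  have e: "up w d ! i = (par ^^ i) w" "up w d ! Suc i = (par ^^ Suc i) w"
    unfolding up_def using id by (simp_all add: nth_map del: upt_Suc) 
  show "ADJ (up w d ! i) (up w d ! Suc i)" unfolding e adj_def
    using l l2 level_verts by (auto simp: level_iff)
qed

lemma up_sum: assumes "w \<in> level Xs k" "d \<le> k"
  shows "sum_list (map pw (up w d)) \<le> pw ((par ^^ d) w) / (1 - ep)"
  using assms(2)
proof (induction d)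
  case 0
  have "0 < pw w" using assms(1) level_verts pw_pos by blast
  moreover have "0 < 1 - ep" "1 - ep \<le> 1" using h1f em_le_ep by auto
  ultimately have "pw w \<le> pw w / (1 - ep)" by (simp add: le_divide_eq)
  then show ?case unfolding up_def by simp
next
  case (Suc d)
  have l: "(par ^^ Suc d) w \<in> level Xs (k - Suc d)" using par_iter[OF assms(1) Suc.prems] by simp
  have l1: "(par ^^ d) w \<in> level Xs (Suc (k - Suc d))"
    using par_iter[OF assms(1), of d] Suc.prems by (simp add: Suc_diff_Suc)
  have "pw ((par ^^ d) w) \<le> ep * pw ((par ^^ Suc d) w)" using pw_par_ep[OF l1] by simp
  have ep1: "0 < 1 - ep" using h1f by auto
  have "sum_list (map pw (up w (Suc d))) = sum_list (map pw (up w d)) + pw ((par ^^ Suc d) w)"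
    by (simp add: up_Suc)
  also have "\<dots> \<le> pw ((par ^^ d) w) / (1 - ep) + pw ((par ^^ Suc d) w)" using Suc by simp
  also have "\<dots> \<le> ep * pw ((par ^^ Suc d) w) / (1 - ep) + pw ((par ^^ Suc d) w)"
    using \<open>pw ((par ^^ d) w) \<le> ep * pw ((par ^^ Suc d) w)\<close> ep1 by (simp add: divide_right_mono)
  also have "\<dots> = pw ((par ^^ Suc d) w) / (1 - ep)" using ep1 by (simp add: field_simps)
  finally show ?case .
qed

definition PP where "PP N x y = up (vx x N) (N - CT x y) @ rev (up (vx y N) (N - CT x y))"

definition E' where "E' u v \<longleftrightarrow> u = v \<or> ADJ u v"

lemma PP_props:
  assumes xy: "x \<in> X" "y \<in> X" "x \<noteq> y" and N: "CT x y < N"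
  shows "PP N x y \<noteq> []" "hd (PP N x y) = vx x N" "last (PP N x y) = vx y N"
    "set (PP N x y) \<subseteq> verts Xs" "successively E' (PP N x y)"
    "sum_list (map pw (PP N x y)) \<le> 2 * K * PC x y / (1 - ep)"
proof -
  define t where "t = CT x y"
  define d where "d = N - t"
  define w1 where "w1 = vx x N"
  define w2 where "w2 = vx y N"
  define A1 where "A1 = (par ^^ d) w1"
  define A2 where "A2 = (par ^^ d) w2"
  have pp: "PP N x y = up w1 d @ rev (up w2 d)" unfolding PP_def w1_def w2_def d_def t_def ..
  have w1: "w1 \<in> level Xs N" "dist (fst w1) x < (1/a)^N" unfolding w1_def using vx[OF xy(1)] by auto
  have w2: "w2 \<in> level Xs N" "dist (fst w2) y < (1/a)^N" unfolding w2_def using vx[OF xy(2)] by auto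
  have dN: "d \<le> N" unfolding d_def by simp
  have Nd: "N - d = t" unfolding d_def t_def using N by simp
  have A1l: "A1 \<in> level Xs t" and dA1: "dist (fst w1) (fst A1) \<le> (6/5) * (1/a)^t"
    using par_iter[OF w1(1) dN] unfolding A1_def Nd by auto
  have A2l: "A2 \<in> level Xs t" and dA2: "dist (fst w2) (fst A2) \<le> (6/5) * (1/a)^t"
    using par_iter[OF w2(1) dN] unfolding A2_def Nd by auto
  have "Suc t \<le> N" using N unfolding t_def by simp
  then have "(1/a)^N \<le> (1/a)^Suc t" by (rule bpow_mono)
  then have bN: "(1/a)^N \<le> (1/6) * (1/a)^t" using bpow_Suc[of t] by linarith
  have bt: "0 < (1/a)^t" by (rule bpow_pos)
  have x1: "dist (fst A1) x < (6/5 + 1/6) * (1/a)^t"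
    using dist_triangle[of "fst A1" x "fst w1"] dA1 w1(2) bN by (simp add: dist_commute algebra_simps)
  have y2: "dist (fst A2) y < (6/5 + 1/6) * (1/a)^t"
    using dist_triangle[of "fst A2" y "fst w2"] dA2 w2(2) bN by (simp add: dist_commute algebra_simps)
  obtain c where c: "c \<in> CS x y" using cset_ne[OF xy] by blast
  have cl: "c \<in> level Xs t" using cset_level[OF c] unfolding t_def .
  have cx: "dist (fst c) x < 2 * (1/a)^t" and cy: "dist (fst c) y < 2 * (1/a)^t"
    using cset_near[OF c] unfolding t_def by auto
  have x2: "dist (fst A2) x < 6 * (1/a)^t"
  proof -
    have "dist (fst A2) x \<le> dist (fst A2) y + dist y (fst c) + dist (fst c) x"
      by (metis dist_triangle add_right_mono order_trans)
    then show ?thesis using y2 cx cy bt by (simp add: dist_commute)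
  qed
  have E12: "E' A1 A2" unfolding E'_def adj_def
    using near_hadj[OF A1l A2l xy(1)] x1 x2 bt by auto
  have pA1: "pw A1 \<le> K * PC x y"
  proof -
    have "A1 = c \<or> hadj X a lam Xs A1 c" using near_hadj[OF A1l cl xy(1)] x1 cx bt by auto
    then have "pw A1 \<le> K * pw c" using K_near cl level_verts by blast
    also have "\<dots> \<le> K * PC x y" using piC_ge[OF c] K_ge1 by simp
    finally show ?thesis .
  qed
  have pA2: "pw A2 \<le> K * PC x y"
  proof -
    have "A2 = c \<or> hadj X a lam Xs A2 c" using near_hadj[OF A2l cl xy(2)] y2 cy bt by auto
    then have "pw A2 \<le> K * pw c" using K_near cl level_verts by blast
    also have "\<dots> \<le> K * PC x y" using piC_ge[OF c] K_ge1 by simp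
    finally show ?thesis .
  qed
  show "PP N x y \<noteq> []" unfolding pp using up_basic by simp
  show "hd (PP N x y) = vx x N" unfolding pp w1_def using up_basic by simp
  show "last (PP N x y) = vx y N" unfolding pp w2_def using up_basic by (simp add: last_rev)
  show "set (PP N x y) \<subseteq> verts Xs" unfolding pp using up_set[OF w1(1) dN] up_set[OF w2(1) dN] by auto
  have s1: "successively E' (up w1 d)"
    using up_succ[OF w1(1) dN] by (rule successively_mono) (simp add: E'_def)
  have s2: "successively E' (rev (up w2 d))" unfolding successively_rev
    using up_succ[OF w2(1) dN] by (rule successively_mono) (simp add: E'_def adj_sym)
  show "successively E' (PP N x y)" unfolding pp successively_append_iff
    using s1 s2 E12 up_basic by (simp add: hd_rev A1_def A2_def)
  have ep1: "0 < 1 - ep" using h1f by auto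
  have "sum_list (map pw (PP N x y)) = sum_list (map pw (up w1 d)) + sum_list (map pw (up w2 d))"
    unfolding pp by (simp add: rev_map[symmetric])
  also have "\<dots> \<le> pw A1 / (1 - ep) + pw A2 / (1 - ep)"
    using up_sum[OF w1(1) dN] up_sum[OF w2(1) dN] unfolding A1_def A2_def by simp
  also have "\<dots> \<le> K * PC x y / (1 - ep) + K * PC x y / (1 - ep)"
    using pA1 pA2 ep1 by (intro add_mono divide_right_mono) auto
  also have "\<dots> = 2 * K * PC x y / (1 - ep)" by (simp add: field_simps)
  finally show "sum_list (map pw (PP N x y)) \<le> 2 * K * PC x y / (1 - ep)" .
qed

lemma bp_props:
  assumes "2 \<le> length zs" "set zs \<subseteq> X" "successively (\<lambda>u v. u \<noteq> v \<and> CT u v < N) zs"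
  shows "bpg (PP N) zs \<noteq> [] \<and> hd (bpg (PP N) zs) = vx (hd zs) N \<and> last (bpg (PP N) zs) = vx (last zs) N \<and>
    set (bpg (PP N) zs) \<subseteq> verts Xs \<and> successively E' (bpg (PP N) zs) \<and>
    sum_list (map pw (bpg (PP N) zs)) \<le> 2 * K / (1 - ep) * csum PC zs"
  using assms
proof (induction zs rule: induct_list012)
  case (3 x y zs)
  have xy: "x \<in> X" "y \<in> X" "x \<noteq> y" "CT x y < N" using "3.prems"(2,3) by auto
  note P = PP_props[OF xy]
  show ?case
  proof (cases "zs = []")
    case True
    then show ?thesis using P by (simp add: field_simps)
  next
    case False
    have IH: "bpg (PP N) (y # zs) \<noteq> [] \<and> hd (bpg (PP N) (y # zs)) = vx (hd (y # zs)) N \<and>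
      last (bpg (PP N) (y # zs)) = vx (last (y # zs)) N \<and>
      set (bpg (PP N) (y # zs)) \<subseteq> verts Xs \<and> successively E' (bpg (PP N) (y # zs)) \<and>
      sum_list (map pw (bpg (PP N) (y # zs))) \<le> 2 * K / (1 - ep) * csum PC (y # zs)"
    proof (rule "3.IH"(2))
      show "2 \<le> length (y # zs)" using False by (cases zs) auto
      show "set (y # zs) \<subseteq> X" using "3.prems"(2) by auto
      show "successively (\<lambda>u v. u \<noteq> v \<and> CT u v < N) (y # zs)" using "3.prems"(3) by simp
    qed
    have "E' (last (PP N x y)) (hd (bpg (PP N) (y # zs)))" using P IH by (simp add: E'_def)
    then have succ: "successively E' (bpg (PP N) (x # y # zs))"
      using P IH by (simp add: successively_append_iff)
    have "sum_list (map pw (bpg (PP N) (x # y # zs))) = sum_list (map pw (PP N x y)) + sum_list (map pw (bpg (PP N) (y # zs)))"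
      by simp
    also have "\<dots> \<le> 2 * K * PC x y / (1 - ep) + 2 * K / (1 - ep) * csum PC (y # zs)"
      using P IH by (intro add_mono) auto
    also have "\<dots> = 2 * K / (1 - ep) * csum PC (x # y # zs)" by (simp add: add_divide_distrib algebra_simps)
    finally show ?thesis using P IH succ False by auto
  qed
qed auto

definition K1 where "K1 = (SOME K1. K1 > 0 \<and> (\<forall>x\<in>X. \<forall>y\<in>X. x \<noteq> y \<longrightarrow>
     (\<exists>n0. \<forall>n\<ge>n0. \<forall>\<gamma>\<in>Gamma X a lam Xs par n x y. PC x y / K1 \<le> Lrho par rho \<gamma>)))"

lemma K1: "K1 > 0" "\<And>x y. x \<in> X \<Longrightarrow> y \<in> X \<Longrightarrow> x \<noteq> y \<Longrightarrow>
     \<exists>n0. \<forall>n\<ge>n0. \<forall>\<gamma>\<in>Gamma X a lam Xs par n x y. PC x y / K1 \<le> Lrho par rho \<gamma>"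
proof -
  have "K1 > 0 \<and> (\<forall>x\<in>X. \<forall>y\<in>X. x \<noteq> y \<longrightarrow>
     (\<exists>n0. \<forall>n\<ge>n0. \<forall>\<gamma>\<in>Gamma X a lam Xs par n x y. PC x y / K1 \<le> Lrho par rho \<gamma>))"
    unfolding K1_def using h3 unfolding H3_def by (rule someI_ex)
  then show "K1 > 0" "\<And>x y. x \<in> X \<Longrightarrow> y \<in> X \<Longrightarrow> x \<noteq> y \<Longrightarrow>
     \<exists>n0. \<forall>n\<ge>n0. \<forall>\<gamma>\<in>Gamma X a lam Xs par n x y. PC x y / K1 \<le> Lrho par rho \<gamma>" by auto
qed

definition cH where "cH = (1 - ep) / (2 * K * K1)"

lemma cH_pos: "0 < cH" unfolding cH_def using h1f K_ge1 K1 by simp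

lemma T5_chain: assumes xy: "x \<in> X" "y \<in> X" "x \<noteq> y" and c: "chn x y zs"
  shows "cH * PC x y \<le> csum PC zs"
proof -
  obtain n0 where n0: "\<forall>n\<ge>n0. \<forall>\<gamma>\<in>Gamma X a lam Xs par n x y. PC x y / K1 \<le> Lrho par rho \<gamma>"
    using K1(2)[OF xy] by blast
  define N where "N = Suc (n0 + csum CT zs)"
  have cz: "2 \<le> length zs" "hd zs = x" "last zs = y" "set zs \<subseteq> X"
     "\<And>i. Suc i < length zs \<Longrightarrow> zs ! i \<noteq> zs ! Suc i" using c unfolding chn_def by auto
  have "CT (zs ! i) (zs ! Suc i) < N" if "Suc i < length zs" for i
  proof -
    have "CT (zs ! i) (zs ! Suc i) \<le> csum CT zs" unfolding csum_def
      using that by (intro member_le_sum[of i "{..<length zs - 1}" "\<lambda>i. CT (zs ! i) (zs ! Suc i)"]) auto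
    then show ?thesis unfolding N_def by simp
  qed
  then have succ: "successively (\<lambda>u v. u \<noteq> v \<and> CT u v < N) zs"
    unfolding successively_conv_nth using cz(5) by blast
  note B = bp_props[OF cz(1) cz(4) succ]
  define \<gamma> where "\<gamma> = remdups_adj (bpg (PP N) zs)"
  have sE: "successively E' \<gamma>" unfolding \<gamma>_def using B by (intro successively_remdups_adjI) auto
  have sne: "successively (\<noteq>) \<gamma>" unfolding \<gamma>_def using distinct_adj_remdups_adj unfolding distinct_adj_def .
  have sadj: "\<forall>i. Suc i < length \<gamma> \<longrightarrow> ADJ (\<gamma> ! i) (\<gamma> ! Suc i)"
    using sE sne unfolding successively_conv_nth E'_def by blast
  have hx: "hd \<gamma> = vx x N" "last \<gamma> = vx y N" unfolding \<gamma>_def using B cz by auto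
  have "\<gamma> \<in> Gamma X a lam Xs par N x y"
    unfolding Gamma_def gpath_def
    using B sadj hx vx[OF xy(1), of N] vx[OF xy(2), of N] xy
    by (auto simp: \<gamma>_def vball_def Xball_def level_iff)
  moreover have "n0 \<le> N" unfolding N_def by simp
  ultimately have "PC x y / K1 \<le> Lrho par rho \<gamma>" using n0 by blast
  also have "\<dots> \<le> sum_list (map pw (bpg (PP N) zs))" unfolding Lrho_def \<gamma>_def
    by (rule sum_remdups_adj) (use B pw_pos in \<open>auto intro: less_imp_le\<close>)
  also have "\<dots> \<le> 2 * K / (1 - ep) * csum PC zs" using B by simp
  finally have "PC x y / K1 \<le> 2 * K / (1 - ep) * csum PC zs" .
  then show ?thesis using K1(1) K_ge1 h1f unfolding cH_def by (simp add: field_simps)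
qed

lemma T5: assumes xy: "x \<in> X" "y \<in> X" "x \<noteq> y" shows "cH * PC x y \<le> TH x y"
proof -
  have ne: "TS x y \<noteq> {}" using TS_two[OF xy] by blast
  show ?thesis unfolding Theta_eq[OF xy(3)]
    by (rule cInf_greatest[OF ne]) (auto simp: TS_def intro: T5_chain[OF xy])
qed

lemma TL: assumes xy: "x \<in> X" "y \<in> X" "x \<noteq> y" and m: "CT x y \<le> m"
  shows "cH * q x m \<le> K^2 * TH x y"
proof -
  have "q x m \<le> K * q x (CT x y)" by (rule Q1[OF xy(1) m])
  also have "\<dots> \<le> K * (K * PC x y)" using C5[OF xy] K_ge1 by (intro mult_left_mono) auto
  finally have "cH * q x m \<le> cH * (K * (K * PC x y))" using cH_pos by (intro mult_left_mono) auto
  also have "\<dots> = K^2 * (cH * PC x y)" by (simp add: power2_eq_square algebra_simps)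
  also have "\<dots> \<le> K^2 * TH x y" using T5[OF xy] by (intro mult_left_mono) auto
  finally show ?thesis .
qed

end

context PS begin

abbreviation "MM k \<equiv> tmu (level Xs k) (mu k)"
abbreviation "MK k \<equiv> Mk (level Xs k) (mu k)"

lemma mu_nn: "u \<in> level Xs k \<Longrightarrow> 0 \<le> mu k u" using mupos less_imp_le by blast

lemma MM_emeasure: "A \<in> sets borel \<Longrightarrow> emeasure (MM k) A = ennreal (MK k A)"
  unfolding Mk_def by (rule tmu_emeasure[OF level_finite mu_nn])

lemma MM_measure: "A \<in> sets borel \<Longrightarrow> measure (MM k) A = MK k A"
  by (rule tmu_measure[OF level_finite mu_nn])

lemma MK_nn: "0 \<le> MK k A" unfolding Mk_def using mu_nn by (intro sum_nonneg) auto

lemma MK_mono: "A \<subseteq> B \<Longrightarrow> MK k A \<le> MK k B" by (rule Mk_mono[OF level_finite mu_nn])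

lemma MK_UNIV: "MK k UNIV = 1" unfolding Mk_def using musum by simp

lemma MK_negX: "MK k (- X) = 0"
proof -
  have "{u \<in> level Xs k. fst u \<in> - X} = {}" using level_X by auto
  then show ?thesis unfolding Mk_def by (metis sum.empty)
qed

definition dl where "dl k = (1 + 2 * lam / a) * (1/a) ^ k"

lemma dl_le: "dl k \<le> 18/5 * ((1/a)^k - (1/a)^Suc k)"
proof -
  have "lam / a \<le> 1" using hf_facts(1) a_ge by simp
  then have "1 + 2 * lam / a \<le> 3" by simp
  then have "dl k \<le> 3 * (1/a)^k" unfolding dl_def using bpow_pos[of k] by (intro mult_right_mono) auto
  moreover have "18/5 * ((1/a)^k - (1/a)^Suc k) = 18/5 * (1/a)^k - 18/5 * (1/a)^Suc k"
    by (rule right_diff_distrib)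
  ultimately show ?thesis using bpow_Suc[of k] by linarith
qed

lemma dl_le': "dl k \<le> 18/5 * (1/a)^k - 18/5 * (1/a)^Suc k"
  using dl_le[of k] by (simp only: right_diff_distrib)

lemma arith1: "s + 18/5 * ((1/a)^m - (1/a)^(m+d)) + dl (m + d) \<le> s + 18/5 * ((1/a)^m - (1/a)^(m + Suc d))"
proof -
  have e: "(1/a)^(m + Suc d) = (1/a)^Suc (m+d)" by simp
  show ?thesis unfolding e right_diff_distrib using dl_le'[of "m+d"] by linarith
qed

lemma coup_step: "MK k (ball z s) \<le> MK (Suc k) (ball z (s + dl k))"
    "MK (Suc k) (ball z s) \<le> MK k (ball z (s + dl k))"
  using coupled_ball[OF coup[rule_format, of k, folded dl_def], of z s]
  by (simp_all add: MM_emeasure MK_nn)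

lemma iter_lower: "MK m (ball z s) \<le> MK (m + d) (ball z (s + 18/5 * ((1/a)^m - (1/a)^(m+d))))"
proof (induction d)
  case 0 then show ?case by simp
next
  case (Suc d)
  have "MK (m + d) (ball z (s + 18/5 * ((1/a)^m - (1/a)^(m+d)))) \<le>
        MK (Suc (m + d)) (ball z (s + 18/5 * ((1/a)^m - (1/a)^(m+d)) + dl (m + d)))"
    by (rule coup_step(1))
  also have "\<dots> \<le> MK (Suc (m + d)) (ball z (s + 18/5 * ((1/a)^m - (1/a)^(m + Suc d))))"
    using arith1 by (intro MK_mono subset_ball)
  finally show ?case using Suc by simp
qed

lemma iter_upper: "MK (m + d) (ball z s) \<le> MK m (ball z (s + 18/5 * ((1/a)^m - (1/a)^(m+d))))"
proof (induction d arbitrary: s)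
  case 0 then show ?case by simp
next
  case (Suc d)
  have "MK (m + Suc d) (ball z s) \<le> MK (m + d) (ball z (s + dl (m + d)))"
    using coup_step(2)[of "m + d"] by simp
  also have "\<dots> \<le> MK m (ball z (s + dl (m + d) + 18/5 * ((1/a)^m - (1/a)^(m+d))))"
    by (rule Suc.IH)
  also have "\<dots> \<le> MK m (ball z (s + 18/5 * ((1/a)^m - (1/a)^(m + Suc d))))"
    using arith1[of s m d] by (intro MK_mono subset_ball) (simp add: algebra_simps)
  finally show ?case .
qed

definition sq where "sq = (SOME s. strict_mono s \<and> (\<forall>g::'a \<Rightarrow> real. continuous_on UNIV g \<and> bounded (range g) \<longrightarrow>
        (\<lambda>j. integral\<^sup>L (MM (s j)) g) \<longlonglongrightarrow> integral\<^sup>L mm g))"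

lemma sq: "strict_mono sq" "\<forall>g::'a \<Rightarrow> real. continuous_on UNIV g \<and> bounded (range g) \<longrightarrow>
        (\<lambda>j. integral\<^sup>L (MM (sq j)) g) \<longlonglongrightarrow> integral\<^sup>L mm g"
proof -
  have "\<exists>s. strict_mono s \<and> (\<forall>g::'a \<Rightarrow> real. continuous_on UNIV g \<and> bounded (range g) \<longrightarrow>
        (\<lambda>j. integral\<^sup>L (MM (s j)) g) \<longlonglongrightarrow> integral\<^sup>L mm g)"
    using swl unfolding sub_weak_limit_def by simp
  then have "strict_mono sq \<and> (\<forall>g::'a \<Rightarrow> real. continuous_on UNIV g \<and> bounded (range g) \<longrightarrow>
        (\<lambda>j. integral\<^sup>L (MM (sq j)) g) \<longlonglongrightarrow> integral\<^sup>L mm g)"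
    unfolding sq_def by (rule someI_ex)
  then show "strict_mono sq" "\<forall>g::'a \<Rightarrow> real. continuous_on UNIV g \<and> bounded (range g) \<longrightarrow>
        (\<lambda>j. integral\<^sup>L (MM (sq j)) g) \<longlonglongrightarrow> integral\<^sup>L mm g" by auto
qed

lemma mm_sets: "sets mm = sets borel"
  using swl unfolding sub_weak_limit_def by (rule conjunct1)
lemma mm_fin: "finite_measure mm"
  using swl unfolding sub_weak_limit_def by (rule conjunct1[OF conjunct2])

lemma WL: "wlim MM mm sq"
proof (rule wlim.intro)
  show "\<And>k. finite_measure (MM k)" by (rule tmu_finite[OF level_finite mu_nn])
qed (rule sq(2), rule tmu_sets, rule mm_sets, rule mm_fin)

lemma mm_UNIV: "measure mm UNIV = 1"
  using wlim.weak_total[OF WL] MM_measure MK_UNIV by simp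

lemma mm_negX: "emeasure mm (- X) = 0"
  using wlim.weak_null[OF WL Xclosed Xne] MM_measure MK_negX Xclosed by simp

lemma mm_X: "A \<in> sets borel \<Longrightarrow> measure mm (A \<inter> X) = measure mm A"
proof -
  assume A: "A \<in> sets borel"
  interpret finite_measure mm by (rule mm_fin)
  have X: "X \<in> sets mm" "- X \<in> sets mm" using Xclosed mm_sets by auto
  have A': "A \<in> sets mm" using A mm_sets by simp
  have "measure mm A = measure mm ((A \<inter> X) \<union> (A \<inter> - X))" by (rule arg_cong[where f="measure mm"]) blast
  also have "\<dots> = measure mm (A \<inter> X) + measure mm (A \<inter> - X)"
    using X A' by (intro finite_measure_Union) auto
  also have "measure mm (A \<inter> - X) = 0"
  proof -
    have "emeasure mm (A \<inter> - X) \<le> emeasure mm (- X)" using X A' by (intro emeasure_mono) auto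
    then have "emeasure mm (A \<inter> - X) = 0" using mm_negX by simp
    then show ?thesis by (simp add: measure_def)
  qed
  finally show ?thesis by simp
qed

lemma mm_Xone: "measure mm X = 1" using mm_X[of UNIV] mm_UNIV by simp

lemma sq_ge: "j \<le> sq j" using seq_suble[OF sq(1)] .

lemma LB: assumes x: "x \<in> X" shows "mu (Suc n) (vx x (Suc n)) \<le> measure mm (ball x ((1/a)^n))"
proof -
  define w where "w = vx x (Suc n)"
  define pt where "pt = fst w"
  have wl: "w \<in> level Xs (Suc n)" unfolding w_def by (rule vx(1)[OF x])
  have dp: "dist pt x < (1/a)^Suc n" unfolding pt_def w_def by (rule vx(2)[OF x])
  have bS: "(1/a)^Suc n \<le> (1/6) * (1/a)^n" by (rule bpow_Suc)
  have bSp: "0 < (1/a)^Suc n" by (rule bpow_pos)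
  define e where "e = ((1/a)^n - dist pt x - 18/5 * (1/a)^Suc n) / 2"
  have "0 < (1/a)^n - dist pt x - 18/5 * (1/a)^Suc n" using dp bS bSp by linarith
  then have e: "0 < e" unfolding e_def by simp
  define R1 where "R1 = e + 18/5 * (1/a)^Suc n"
  have "mu (Suc n) w \<le> measure mm (ball pt (R1 + e))"
  proof (rule wlim.weak_lower[OF WL])
    show "R1 < R1 + e" using e by simp
    fix j assume j: "Suc n \<le> j"
    then have sj: "Suc n \<le> sq j" using sq_ge[of j] by simp
    then obtain d where d: "sq j = Suc n + d" using le_Suc_ex by blast
    have "mu (Suc n) w \<le> MK (Suc n) (ball pt e)"
      unfolding Mk_def using wl e mu_nn
      by (intro member_le_sum[of w _ "mu (Suc n)"]) (auto simp: pt_def intro: finite_subset[OF _ level_finite])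
    also have "\<dots> \<le> MK (Suc n + d) (ball pt (e + 18/5 * ((1/a)^Suc n - (1/a)^(Suc n + d))))"
      by (rule iter_lower)
    also have "\<dots> \<le> MK (Suc n + d) (ball pt R1)"
      unfolding R1_def using bpow_pos[of "Suc n + d"] by (intro MK_mono subset_ball) simp
    finally show "mu (Suc n) w \<le> measure (MM (sq j)) (ball pt R1)" using d by (simp add: MM_measure)
  qed
  also have "\<dots> \<le> measure mm (ball x ((1/a)^n))"
  proof -
    interpret finite_measure mm by (rule mm_fin)
    have "ball pt (R1 + e) \<subseteq> ball x ((1/a)^n)"
    proof
      fix z assume "z \<in> ball pt (R1 + e)"
      then have "dist pt z < R1 + e" by simp
      moreover have "dist x z \<le> dist pt x + dist pt z" by (metis dist_commute dist_triangle)
      ultimately show "z \<in> ball x ((1/a)^n)" unfolding R1_def e_def by simp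
    qed
    then show ?thesis using mm_sets by (intro finite_measure_mono) auto
  qed
  finally show ?thesis unfolding w_def .
qed

lemma UB: assumes x: "x \<in> X" shows "measure mm (ball x ((2/3) * (1/a)^m)) \<le> MK m (ball x (5 * (1/a)^m))"
proof (rule wlim.weak_upper[OF WL])
  have bp: "0 < (1/a)^m" by (rule bpow_pos)
  show "(2/3) * (1/a)^m < (2/3) * (1/a)^m + (1/10) * (1/a)^m" using bp by simp
  fix j assume j: "m \<le> j"
  then have "m \<le> sq j" using sq_ge[of j] by simp
  then obtain d where d: "sq j = m + d" using le_Suc_ex le_iff_add by blast
  have "MK (m + d) (ball x ((2/3) * (1/a)^m + (1/10) * (1/a)^m)) \<le>
     MK m (ball x ((2/3) * (1/a)^m + (1/10) * (1/a)^m + 18/5 * ((1/a)^m - (1/a)^(m+d))))"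
    by (rule iter_upper)
  also have "\<dots> \<le> MK m (ball x (5 * (1/a)^m))"
    using bp bpow_pos[of "m+d"] by (intro MK_mono subset_ball) (unfold right_diff_distrib, linarith)
  finally show "measure (MM (sq j)) (ball x ((2/3) * (1/a)^m + (1/10) * (1/a)^m)) \<le> MK m (ball x (5 * (1/a)^m))"
    using d by (simp add: MM_measure)
qed

end

context PS begin

definition Nd where "Nd = (SOME N::nat. \<forall>x\<in>X. \<forall>r>0. \<exists>F. finite F \<and> F \<subseteq> X \<and> card F \<le> N \<and>
       Xball X x (2 * r) \<subseteq> (\<Union>c\<in>F. Xball X c r))"

lemma Nd: "x \<in> X \<Longrightarrow> 0 < r \<Longrightarrow> \<exists>F. finite F \<and> F \<subseteq> X \<and> card F \<le> Nd \<and>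
       Xball X x (2 * r) \<subseteq> (\<Union>c\<in>F. Xball X c r)"
proof -
  have "\<forall>x\<in>X. \<forall>r>0. \<exists>F. finite F \<and> F \<subseteq> X \<and> card F \<le> Nd \<and>
       Xball X x (2 * r) \<subseteq> (\<Union>c\<in>F. Xball X c r)"
    unfolding Nd_def using dbl unfolding doubling_def by (rule someI_ex)
  then show "x \<in> X \<Longrightarrow> 0 < r \<Longrightarrow> ?thesis" by blast
qed

lemma dbl_iter: "x \<in> X \<Longrightarrow> 0 < r \<Longrightarrow> \<exists>F. finite F \<and> F \<subseteq> X \<and> card F \<le> Nd ^ k \<and>
       Xball X x (2 ^ k * r) \<subseteq> (\<Union>c\<in>F. Xball X c r)"
proof (induction k arbitrary: r)
  case 0
  then show ?case by (intro exI[of _ "{x}"]) auto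
next
  case (Suc k)
  obtain F where F: "finite F" "F \<subseteq> X" "card F \<le> Nd ^ k" "Xball X x (2 ^ k * (2 * r)) \<subseteq> (\<Union>c\<in>F. Xball X c (2 * r))"
    using Suc.IH[of "2 * r"] Suc.prems by auto
  have "\<forall>c\<in>F. \<exists>G. finite G \<and> G \<subseteq> X \<and> card G \<le> Nd \<and> Xball X c (2 * r) \<subseteq> (\<Union>g\<in>G. Xball X g r)"
    using Nd F(2) Suc.prems(2) by blast
  then obtain G where G: "\<And>c. c \<in> F \<Longrightarrow> finite (G c) \<and> G c \<subseteq> X \<and> card (G c) \<le> Nd \<and> Xball X c (2 * r) \<subseteq> (\<Union>g\<in>G c. Xball X g r)"
    by metis
  define F' where "F' = (\<Union>c\<in>F. G c)"
  have "finite F'" unfolding F'_def using F(1) G by auto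
  moreover have "F' \<subseteq> X" unfolding F'_def using G by auto
  moreover have "card F' \<le> Nd ^ Suc k"
  proof -
    have "card F' \<le> (\<Sum>c\<in>F. card (G c))" unfolding F'_def by (rule card_UN_le[OF F(1)])
    also have "\<dots> \<le> card F * Nd" using G sum_bounded_above[of F "\<lambda>c. card (G c)" Nd] by auto
    also have "\<dots> \<le> Nd ^ k * Nd" using F(3) by (rule mult_right_mono) simp
    finally show ?thesis by (simp add: mult.commute)
  qed
  moreover have "Xball X x (2 ^ Suc k * r) \<subseteq> (\<Union>c\<in>F'. Xball X c r)"
  proof -
    have e: "2 ^ Suc k * r = 2 ^ k * (2 * r)" by simp
    show ?thesis
    proof
      fix z assume "z \<in> Xball X x (2 ^ Suc k * r)"
      then have "z \<in> Xball X x (2 ^ k * (2 * r))" unfolding e .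
      then obtain c where c: "c \<in> F" "z \<in> Xball X c (2 * r)" using F(4) by blast
      then obtain g where g: "g \<in> G c" "z \<in> Xball X g r" using G[OF c(1)] by blast
      have "g \<in> F'" unfolding F'_def using c(1) g(1) by blast
      then show "z \<in> (\<Union>c\<in>F'. Xball X c r)" using g(2) by blast
    qed
  qed
  ultimately show ?case by blast
qed

lemma count_sep: assumes x: "x \<in> X" shows "card (Xs m \<inter> Xball X x (8 * (1/a)^m)) \<le> Nd ^ 4"
proof -
  have rp: "0 < (1/a)^m / 2" using bpow_pos[of m] by simp
  obtain F where F: "finite F" "F \<subseteq> X" "card F \<le> Nd ^ 4"
     "Xball X x (2 ^ 4 * ((1/a)^m / 2)) \<subseteq> (\<Union>c\<in>F. Xball X c ((1/a)^m / 2))"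
    using dbl_iter[OF x rp, of 4] by blast
  define S where "S = Xs m \<inter> Xball X x (8 * (1/a)^m)"
  have e8: "2 ^ 4 * ((1/a)^m / 2) = 8 * (1/a)^m" by simp
  have ex: "\<exists>c. c \<in> F \<and> s \<in> Xball X c ((1/a)^m / 2)" if "s \<in> S" for s
    using that F(4) unfolding S_def e8 by blast
  define f where "f s = (SOME c. c \<in> F \<and> s \<in> Xball X c ((1/a)^m / 2))" for s
  have f: "f s \<in> F \<and> s \<in> Xball X (f s) ((1/a)^m / 2)" if "s \<in> S" for s
    unfolding f_def using ex[OF that] by (rule someI_ex)
  have "inj_on f S"
  proof (rule inj_onI)
    fix s1 s2 assume s: "s1 \<in> S" "s2 \<in> S" "f s1 = f s2"
    have "dist (f s1) s1 < (1/a)^m / 2" "dist (f s1) s2 < (1/a)^m / 2"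
      using f[OF s(1)] f[OF s(2)] s(3) by (auto simp: Xball_def)
    moreover have "dist s1 s2 \<le> dist (f s1) s1 + dist (f s1) s2" by (metis dist_commute dist_triangle)
    ultimately have "dist s1 s2 < (1/a)^m" by linarith
    then show "s1 = s2" using Xs_sep[of m] s(1,2) unfolding separated_def S_def by force
  qed
  moreover have "f ` S \<subseteq> F" using f by auto
  ultimately have "card S \<le> card F" using F(1) by (rule card_inj_on_le)
  then show ?thesis using F(3) unfolding S_def by simp
qed

lemma count_level: assumes x: "x \<in> X"
  shows "card {u \<in> level Xs m. fst u \<in> ball x (5 * (1/a)^m)} \<le> Nd ^ 4"
proof -
  define U where "U = {u \<in> level Xs m. fst u \<in> ball x (5 * (1/a)^m)}"
  have "inj_on fst U" unfolding U_def by (rule inj_onI) (auto simp: level_iff prod_eq_iff)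
  then have "card U = card (fst ` U)" by (simp add: card_image)
  also have "\<dots> \<le> card (Xs m \<inter> Xball X x (8 * (1/a)^m))"
  proof (rule card_mono)
    show "finite (Xs m \<inter> Xball X x (8 * (1/a)^m))" using Xs_finite by simp
    show "fst ` U \<subseteq> Xs m \<inter> Xball X x (8 * (1/a)^m)"
      unfolding U_def using bpow_pos[of m] level_X by (auto simp: level_iff Xball_def)
  qed
  also have "\<dots> \<le> Nd ^ 4" by (rule count_sep[OF x])
  finally show ?thesis unfolding U_def .
qed

lemma C_ge1: "1 \<le> C"
proof -
  have e: "0 < em" "em \<le> 1" using h1f em_le_ep by auto
  have "em powr p \<le> 1" using e pp by (intro powr_le1) auto
  moreover have "0 < em powr p" using e by simp
  ultimately have "1 \<le> inverse (em powr p)" by (simp add: one_le_inverse_iff)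
  then show ?thesis using Cge by (simp add: powr_minus)
qed

lemma Kp_ge1: "1 \<le> K powr p" using K_ge1 pp by (intro ge_one_powr_ge_zero) auto

lemma bal_ratio: assumes "u \<in> level Xs m" "v \<in> level Xs m" "u = v \<or> hadj X a lam Xs u v"
  shows "mu m u / pw u powr p \<le> C^2 * mu m v / pw v powr p"
proof (cases "u = v")
  case True
  have "0 \<le> mu m v / pw v powr p" using mu_nn[OF assms(2)] by simp
  moreover have "1 \<le> C^2" using C_ge1 by simp
  ultimately show ?thesis using True mult_right_mono[of 1 "C^2" "mu m v / pw v powr p"] by simp
next
  case False
  then have h: "hadj X a lam Xs u v" using assms(3) by simp
  have "m \<noteq> 0"
  proof
    assume "m = 0"
    then have "u \<in> {(x0, 0)}" "v \<in> {(x0, 0)}" using assms(1,2) level0 by simp_all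
    then show False using False by simp
  qed
  then obtain k where k: "m = Suc k" using not0_implies_Suc by blast
  have "ADJ u v" unfolding adj_def using h by simp
  then show ?thesis using bal[rule_format, of k] assms(1,2) unfolding balanced_def k by blast
qed

lemma bal_bound: assumes x: "x \<in> X" and u: "u \<in> level Xs m" "dist (fst u) x < 6 * (1/a)^m"
  shows "mu m u \<le> C^2 * K powr p * mu m (vx x m)"
proof -
  define v where "v = vx x m"
  have v: "v \<in> level Xs m" "dist (fst v) x < 6 * (1/a)^m"
    unfolding v_def using vx[OF x, of m] bpow_pos[of m] by auto
  have uv: "u = v \<or> hadj X a lam Xs u v" by (rule near_hadj[OF u(1) v(1) x u(2) v(2)])
  have pu: "0 < pw u" and pv: "0 < pw v" using u(1) v(1) level_verts pw_pos by blast+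
  have r: "mu m u / pw u powr p \<le> C^2 * mu m v / pw v powr p" by (rule bal_ratio[OF u(1) v(1) uv])
  have "pw u \<le> K * pw v" using K_near[OF uv] v(1) level_verts by blast
  then have pp1: "pw u powr p \<le> K powr p * pw v powr p"
    using powr_mono2[of p "pw u" "K * pw v"] pp pu pv K_ge1 by (simp add: powr_mult)
  have nn: "0 \<le> C^2 * mu m v / pw v powr p" using mu_nn[OF v(1)] by simp
  have "mu m u = (mu m u / pw u powr p) * pw u powr p" using pu by simp
  also have "\<dots> \<le> (C^2 * mu m v / pw v powr p) * pw u powr p"
    using r by (rule mult_right_mono) simp
  also have "\<dots> \<le> (C^2 * mu m v / pw v powr p) * (K powr p * pw v powr p)"
    using pp1 nn by (rule mult_left_mono)
  also have "\<dots> = C^2 * K powr p * mu m v" using pv by simp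
  finally show ?thesis unfolding v_def .
qed

lemma compat_iter: assumes w: "w \<in> level Xs n" and d: "d \<le> n"
  shows "mu (n - d) ((par ^^ d) w) / pw ((par ^^ d) w) powr p \<le> mu n w / pw w powr p"
  using d
proof (induction d)
  case 0 then show ?case by simp
next
  case (Suc d)
  define v where "v = (par ^^ d) w"
  have vl: "v \<in> level Xs (Suc (n - Suc d))"
    using par_iter[OF w, of d] Suc.prems unfolding v_def by (simp add: Suc_diff_Suc)
  have c: "mu (n - Suc d) (par v) / pw (par v) powr p \<le> mu (Suc (n - Suc d)) v / pw v powr p"
    using compat[rule_format, of "n - Suc d"] vl unfolding compatible_def by blast
  have e1: "Suc (n - Suc d) = n - d" using Suc.prems by simp
  have e2: "par v = (par ^^ Suc d) w" unfolding v_def by simp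
  have A: "mu (n - Suc d) ((par ^^ Suc d) w) / pw ((par ^^ Suc d) w) powr p \<le> mu (n - d) v / pw v powr p"
    using c unfolding e1 e2 .
  have IH: "mu (n - d) v / pw v powr p \<le> mu n w / pw w powr p"
    unfolding v_def by (rule Suc.IH[OF Suc_leD[OF Suc.prems]])
  show ?case using A IH by (rule order_trans)
qed

lemma Dball_meas: assumes x: "x \<in> X" shows "Dball X TH x r \<in> sets borel"
proof -
  define D where "D = Dball X TH x r"
  have ex: "\<exists>j. K^2 * q y j < r - TH x y" if "y \<in> D" for y
    using that q_small[of y "r - TH x y"] unfolding D_def Dball_def by auto
  define jj where "jj y = (SOME j. K^2 * q y j < r - TH x y)" for y
  have jj: "K^2 * q y (jj y) < r - TH x y" if "y \<in> D" for y
    unfolding jj_def using ex[OF that] by (rule someI_ex)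
  define U where "U = (\<Union>y\<in>D. ball y ((1/a)^jj y))"
  have "D = X \<inter> U"
  proof
    show "D \<subseteq> X \<inter> U" unfolding U_def using bpow_pos by (auto simp: D_def Dball_def)
    show "X \<inter> U \<subseteq> D"
    proof
      fix z assume z: "z \<in> X \<inter> U"
      then obtain y where y: "y \<in> D" "dist y z < (1/a)^jj y" unfolding U_def by auto
      have yX: "y \<in> X" using y(1) unfolding D_def Dball_def by auto
      have "TH x z \<le> TH x y + TH y z" using T4[OF x yX] z by auto
      also have "TH y z \<le> K^2 * q y (jj y)" using TU[OF yX _ y(2)] z by auto
      finally show "z \<in> D" using jj[OF y(1)] z unfolding D_def Dball_def by auto
    qed
  qed
  moreover have "open U" unfolding U_def by auto
  ultimately show ?thesis unfolding D_def using Xclosed by auto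
qed

end

context PS begin

definition cL where "cL = min cH 1"
definition c1 where "c1 = cL / K^2"
definition kap where "kap = em / K"
definition Qc where "Qc = K^2 / (c1 * kap^3)"
definition CC where "CC = max 1 (real (Nd^4) * C^2 * K powr p * C^2 * Qc powr p)"

lemma consts_pos: "0 < cL" "cL \<le> 1" "0 < c1" "0 < kap" "kap \<le> 1" "0 < Qc" "1 \<le> CC" "0 < K"
proof -
  show "0 < cL" "cL \<le> 1" unfolding cL_def using cH_pos by auto
  then show "0 < c1" unfolding c1_def using K_ge1 by simp
  show "0 < kap" unfolding kap_def using h1f K_ge1 by simp
  show "kap \<le> 1" unfolding kap_def using h1f em_le_ep K_ge1 by (simp add: divide_le_eq)
  show "0 < Qc" unfolding Qc_def using \<open>0 < c1\<close> \<open>0 < kap\<close> K_ge1 by simp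
  show "1 \<le> CC" unfolding CC_def by simp
  show "0 < K" using K_ge1 by simp
qed

lemma TL': assumes "x \<in> X" "y \<in> X" "x \<noteq> y" "CT x y \<le> m" shows "cL * q x m \<le> K^2 * TH x y"
proof -
  have "cL * q x m \<le> cH * q x m" unfolding cL_def using q_pos[OF assms(1), of m] by (intro mult_right_mono) auto
  also have "\<dots> \<le> K^2 * TH x y" by (rule TL[OF assms])
  finally show ?thesis .
qed

lemma q_small2: assumes "x \<in> X" "0 < e" shows "\<exists>j. q x (Suc j) < e"
proof -
  obtain j where j: "ep ^ j < e" using real_arch_pow_inv[OF assms(2) h1f(2)] by blast
  have "q x (Suc j) \<le> ep ^ Suc (Suc j)" by (rule Q3[OF assms(1)])
  also have "\<dots> \<le> ep ^ j" using h1f em_le_ep by (intro power_decreasing) auto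
  finally show ?thesis using j by (intro exI[of _ j]) simp
qed

lemma HOM: assumes x: "x \<in> X" and r: "0 < r" "r \<le> R"
  shows "measure mm (Dball X TH x R) \<le> CC * (R/r) powr p * measure mm (Dball X TH x r)"
proof -
  interpret finite_measure mm by (rule mm_fin)
  have measD: "Dball X TH x s \<in> sets mm" for s using Dball_meas[OF x] mm_sets by simp
  have RrP: "1 \<le> (R/r) powr p" using r pp by (intro ge_one_powr_ge_zero) auto
  have ex_n: "\<exists>j. K^2 * q x j < r" by (rule q_small[OF x r(1)])
  define n where "n = (LEAST j. K^2 * q x j < r)"
  have n1: "K^2 * q x n < r" unfolding n_def using ex_n by (rule LeastI_ex)
  have n2: "\<not> K^2 * q x j < r" if "j < n" for j using that unfolding n_def by (rule not_less_Least)
  have lowball: "X \<inter> ball x ((1/a)^n) \<subseteq> Dball X TH x r"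
  proof
    fix y assume y: "y \<in> X \<inter> ball x ((1/a)^n)"
    then have "TH x y \<le> K^2 * q x n" using TU[OF x, of y n] by auto
    then show "y \<in> Dball X TH x r" using y n1 unfolding Dball_def by auto
  qed
  show ?thesis
  proof (cases n)
    case 0
    have "X \<subseteq> Dball X TH x r"
    proof
      fix y assume y: "y \<in> X"
      then have "y \<in> ball x ((1/a)^n)" using dist_half[OF x y] 0 by simp
      then show "y \<in> Dball X TH x r" using lowball y by blast
    qed
    then have eq: "Dball X TH x r = X" unfolding Dball_def by auto
    have "measure mm (Dball X TH x R) \<le> measure mm (Dball X TH x r)"
      unfolding eq using Xclosed mm_sets by (intro finite_measure_mono) (auto simp: Dball_def)
    also have "\<dots> \<le> CC * (R/r) powr p * measure mm (Dball X TH x r)"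
    proof -
      have "1 \<le> CC * (R/r) powr p" using consts_pos(7) RrP by (metis mult_mono' zero_le_one mult_1)
      then show ?thesis using mult_right_mono[of 1 "CC * (R/r) powr p" "measure mm (Dball X TH x r)"] by simp
    qed
    finally show ?thesis .
  next
    case (Suc n')
    have "\<not> K^2 * q x n' < r" using n2 Suc by simp
    then have qn': "r / K^2 \<le> q x n'" using K_ge1 by (simp add: divide_le_eq mult.commute)
    have qn: "kap * q x n' \<le> q x n" using Q2[OF x, of n'] Suc unfolding kap_def by simp
    have qSn0: "kap * q x n \<le> q x (Suc n)" using Q2[OF x, of n] unfolding kap_def by simp
    have qSn: "kap^2 * r / K^2 \<le> q x (Suc n)"
    proof -
      have "kap * (r / K^2) \<le> kap * q x n'" using qn' consts_pos by (intro mult_left_mono) auto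
      then have "kap * (r / K^2) \<le> q x n" using qn by linarith
      then have "kap * (kap * (r / K^2)) \<le> kap * q x n" using consts_pos by (intro mult_left_mono) auto
      then show ?thesis using qSn0 by (simp add: power2_eq_square)
    qed
    have Rpos: "0 < R / c1" using r consts_pos by simp
    have ex_m: "\<exists>j. q x (Suc j) < R / c1" by (rule q_small2[OF x Rpos])
    define m where "m = (LEAST j. q x (Suc j) < R / c1)"
    have m1: "q x (Suc m) < R / c1" unfolding m_def using ex_m by (rule LeastI_ex)
    have m0: "R / c1 \<le> q x m" if "1 \<le> m"
    proof -
      have "m - 1 < m" using that by simp
      then have "\<not> q x (Suc (m - 1)) < R / c1" unfolding m_def by (rule not_less_Least)
      then show ?thesis using that by simp
    qed
    have qm: "q x m \<le> R / (c1 * kap)"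
    proof -
      have "kap * q x m \<le> q x (Suc m)" using Q2[OF x, of m] unfolding kap_def by simp
      then have "kap * q x m < R / c1" using m1 by linarith
      then show ?thesis using consts_pos by (simp add: field_simps)
    qed
    have mn: "m \<le> n"
    proof (rule ccontr)
      assume "\<not> m \<le> n"
      then have nm: "n \<le> m" "1 \<le> m" by auto
      have "R / c1 \<le> K * q x n" using m0[OF nm(2)] Q1[OF x nm(1)] by linarith
      then have "R \<le> c1 * (K * q x n)" using consts_pos by (simp add: divide_le_eq mult.commute)
      also have "\<dots> = (cL / K) * q x n" unfolding c1_def using consts_pos by (simp add: power2_eq_square)
      also have "\<dots> \<le> 1 * q x n" using consts_pos K_ge1 q_pos[OF x, of n]
        by (intro mult_right_mono) (auto simp: divide_le_eq)
      also have "\<dots> \<le> K^2 * q x n" using K_ge1 q_pos[OF x, of n] one_le_power[OF K_ge1, of 2]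
        by (intro mult_right_mono) auto
      finally show False using n1 r by linarith
    qed
    have upball: "Dball X TH x R \<subseteq> ball x ((2/3) * (1/a)^m)"
    proof
      fix y assume y: "y \<in> Dball X TH x R"
      then have yX: "y \<in> X" and ty: "TH x y < R" unfolding Dball_def by auto
      have bm: "0 < (1/a)^m" by (rule bpow_pos)
      show "y \<in> ball x ((2/3) * (1/a)^m)"
      proof (cases "y = x \<or> m = 0")
        case True
        then show ?thesis using bm dist_half[OF x yX] by auto
      next
        case False
        then have yx: "x \<noteq> y" and m1': "1 \<le> m" by auto
        have "Suc m \<le> CT x y"
        proof (rule ccontr)
          assume "\<not> Suc m \<le> CT x y"
          then have "CT x y \<le> m" by simp
          then have "cL * q x m \<le> K^2 * TH x y" by (rule TL'[OF x yX yx])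
          also have "\<dots> < K^2 * R" using ty K_ge1 by simp
          also have "\<dots> \<le> K^2 * (c1 * q x m)"
            using m0[OF m1'] consts_pos K_ge1 by (intro mult_left_mono) (auto simp: divide_le_eq mult.commute)
          also have "\<dots> = cL * q x m" unfolding c1_def using K_ge1 by simp
          finally show False by simp
        qed
        then have "(1/a)^CT x y \<le> (1/a)^Suc m" by (rule bpow_mono)
        then have "dist x y < 4 * (1/a)^Suc m" using ctop_dist[OF x yX yx] by linarith
        then show ?thesis using bpow_Suc[of m] by simp
      qed
    qed
    define U where "U = {u \<in> level Xs m. fst u \<in> ball x (5 * (1/a)^m)}"
    define B where "B = C^2 * K powr p * mu m (vx x m)"
    have B0: "0 \<le> B" unfolding B_def using mu_nn[OF vx(1)[OF x]] by simp
    have step1: "measure mm (Dball X TH x R) \<le> real (Nd^4) * B"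
    proof -
      have "measure mm (Dball X TH x R) \<le> measure mm (ball x ((2/3) * (1/a)^m))"
        using upball mm_sets by (intro finite_measure_mono) auto
      also have "\<dots> \<le> MK m (ball x (5 * (1/a)^m))" by (rule UB[OF x])
      also have "\<dots> = sum (mu m) U" unfolding Mk_def U_def ..
      also have "\<dots> \<le> real (card U) * B"
      proof (rule sum_bounded_above)
        fix u assume u: "u \<in> U"
        then have "dist (fst u) x < 6 * (1/a)^m" using bpow_pos[of m] unfolding U_def by (auto simp: dist_commute)
        then show "mu m u \<le> B" unfolding B_def using bal_bound[OF x] u unfolding U_def by blast
      qed
      also have "\<dots> \<le> real (Nd^4) * B"
        using count_level[OF x, of m] B0 unfolding U_def by (intro mult_right_mono) auto
      finally show ?thesis .
    qed
    define w where "w = vx x (Suc n)"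
    have wl: "w \<in> level Xs (Suc n)" unfolding w_def by (rule vx(1)[OF x])
    define d where "d = Suc n - m"
    have dSn: "d \<le> Suc n" unfolding d_def by simp
    have Sd: "Suc n - d = m" unfolding d_def using mn by simp
    define A where "A = (par ^^ d) w"
    have Al: "A \<in> level Xs m" using par_iter[OF wl dSn] unfolding A_def Sd by simp
    have "dist (fst A) x < (6/5 + 1) * (1/a)^m"
      using anc_near[OF x wl _ _, of 1 m] vx(2)[OF x, of "Suc n"] mn unfolding A_def d_def w_def by simp
    then have dA: "dist (fst A) x < 6 * (1/a)^m" using bpow_pos[of m] by simp
    have dv: "dist (fst (vx x m)) x < 6 * (1/a)^m" using vx(2)[OF x, of m] bpow_pos[of m] by simp
    have br: "mu m (vx x m) / q x m powr p \<le> C^2 * mu m A / pw A powr p"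
      unfolding q_def by (rule bal_ratio[OF vx(1)[OF x] Al near_hadj[OF vx(1)[OF x] Al x dv dA]])
    have ci: "mu m A / pw A powr p \<le> mu (Suc n) w / q x (Suc n) powr p"
      using compat_iter[OF wl dSn] unfolding Sd A_def q_def w_def .
    have qmpos: "0 < q x m" and qSpos: "0 < q x (Suc n)" using q_pos[OF x] by auto
    have muw: "0 \<le> mu (Suc n) w" using mu_nn[OF wl] .
    have ratio: "q x m / q x (Suc n) \<le> Qc * (R / r)"
    proof -
      have "q x m / q x (Suc n) \<le> (R / (c1 * kap)) / (kap^2 * r / K^2)"
        using qm qSn qmpos consts_pos r by (intro frac_le) auto
      also have "\<dots> = Qc * (R / r)" unfolding Qc_def using consts_pos r
        by (simp add: field_simps power2_eq_square power3_eq_cube)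
      finally show ?thesis .
    qed
    have step2: "mu m (vx x m) \<le> C^2 * (Qc powr p * (R/r) powr p) * mu (Suc n) w"
    proof -
      have "mu m (vx x m) / q x m powr p \<le> C^2 * (mu (Suc n) w / q x (Suc n) powr p)"
        using br ci C_ge1 by (smt (verit, best) mult_left_mono times_divide_eq_right zero_le_power2)
      then have "mu m (vx x m) \<le> C^2 * (mu (Suc n) w / q x (Suc n) powr p) * q x m powr p"
        using qmpos by (simp add: divide_le_eq)
      also have "\<dots> = C^2 * ((q x m / q x (Suc n)) powr p) * mu (Suc n) w"
        using qmpos qSpos by (simp add: powr_divide field_simps)
      also have "\<dots> \<le> C^2 * (Qc powr p * (R/r) powr p) * mu (Suc n) w"
      proof -
        have "(q x m / q x (Suc n)) powr p \<le> (Qc * (R / r)) powr p"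
          using ratio qmpos qSpos pp by (intro powr_mono2) auto
        also have "\<dots> = Qc powr p * (R/r) powr p" by (rule powr_mult)
        finally show ?thesis using muw by (intro mult_right_mono mult_left_mono) auto
      qed
      finally show ?thesis .
    qed
    have step3: "mu (Suc n) w \<le> measure mm (Dball X TH x r)"
    proof -
      have "mu (Suc n) w \<le> measure mm (ball x ((1/a)^n))" unfolding w_def by (rule LB[OF x])
      also have "\<dots> = measure mm (ball x ((1/a)^n) \<inter> X)" by (rule mm_X[symmetric]) simp
      also have "\<dots> \<le> measure mm (Dball X TH x r)"
        using lowball measD by (intro finite_measure_mono) auto
      finally show ?thesis .
    qed
    have "measure mm (Dball X TH x R) \<le> real (Nd^4) * B" by (rule step1)
    also have "\<dots> \<le> real (Nd^4) * (C^2 * K powr p * (C^2 * (Qc powr p * (R/r) powr p) * mu (Suc n) w))"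
      unfolding B_def using step2 C_ge1 by (intro mult_left_mono) auto
    also have "\<dots> = (real (Nd^4) * C^2 * K powr p * C^2 * Qc powr p) * (R/r) powr p * mu (Suc n) w"
      by (simp add: algebra_simps)
    also have "\<dots> \<le> CC * (R/r) powr p * mu (Suc n) w"
      unfolding CC_def using muw by (intro mult_right_mono) auto
    also have "\<dots> \<le> CC * (R/r) powr p * measure mm (Dball X TH x r)"
      using step3 consts_pos by (intro mult_left_mono) auto
    finally show ?thesis .
  qed
qed

end

context PS begin

lemma TH_lt1: assumes "x \<in> X" "y \<in> X" shows "TH x y < 1"
proof (cases "x = y")
  case True then show ?thesis by (simp add: Theta_def)
next
  case False
  obtain w where w: "w \<in> CS x y" "PC x y = pw w" using piC_in[OF assms False] by blast
  have "pw w \<le> ep ^ Suc (CT x y)" using pw_le_pow cset_level[OF w(1)] by blast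
  also have "\<dots> \<le> ep ^ 1" using h1f em_le_ep by (intro power_decreasing) auto
  finally show ?thesis using T1[OF assms False] w(2) h1f by simp
qed

lemma Dball_big: assumes "x \<in> X" "1 \<le> s" shows "Dball X TH x s = X"
  using TH_lt1[OF assms(1)] assms(2) unfolding Dball_def by force

lemma mB_pos: assumes x: "x \<in> X" and R: "0 < R" shows "0 < measure mm (Dball X TH x R)"
proof -
  define R' where "R' = max R 1"
  have "measure mm (Dball X TH x R') \<le> CC * (R'/R) powr p * measure mm (Dball X TH x R)"
    by (rule HOM[OF x R]) (simp add: R'_def)
  moreover have "measure mm (Dball X TH x R') = 1" using Dball_big[OF x, of R'] mm_Xone by (simp add: R'_def)
  moreover have "0 \<le> measure mm (Dball X TH x R)" by simp
  ultimately show ?thesis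
    by (metis mult_zero_right not_less zero_less_one order_le_less_trans order.strict_iff_not le_less)
qed

definition CA where "CA = CC^2 * 16 powr p"

definition sepF where "sepF B r F \<longleftrightarrow> finite F \<and> F \<subseteq> B \<and> (\<forall>f\<in>F. \<forall>g\<in>F. f \<noteq> g \<longrightarrow> r \<le> TH f g)"

lemma sep_card: assumes x: "x \<in> X" and r: "0 < r" "r \<le> R" and F: "sepF (Dball X TH x R) r F"
  shows "real (card F) \<le> CA * (R/r) powr p"
proof -
  interpret finite_measure mm by (rule mm_fin)
  have Rp: "0 < R" using r by simp
  define mB where "mB = measure mm (Dball X TH x R)"
  have mB: "0 < mB" unfolding mB_def by (rule mB_pos[OF x Rp])
  have Ffin: "finite F" and FB: "F \<subseteq> Dball X TH x R" and Fs: "\<And>f g. f \<in> F \<Longrightarrow> g \<in> F \<Longrightarrow> f \<noteq> g \<Longrightarrow> r \<le> TH f g"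
    using F unfolding sepF_def by auto
  have FX: "F \<subseteq> X" using FB unfolding Dball_def by auto
  define D where "D f = Dball X TH f (r/2)" for f
  have measD: "D f \<in> sets mm" if "f \<in> X" for f unfolding D_def using Dball_meas[OF that] mm_sets by simp
  have each: "mB / (CC * (8 * (R/r)) powr p) \<le> measure mm (D f)" if f: "f \<in> F" for f
  proof -
    have fX: "f \<in> X" using f FX by auto
    have sub: "Dball X TH x R \<subseteq> Dball X TH f (4*R)"
    proof
      fix z assume z: "z \<in> Dball X TH x R"
      then have zX: "z \<in> X" and tz: "TH x z < R" unfolding Dball_def by auto
      have tf: "TH f x < R" using f FB TH_sym unfolding Dball_def by auto
      have "TH f z \<le> TH f x + TH x z" by (rule T4[OF fX x zX])
      then show "z \<in> Dball X TH f (4*R)" using tf tz zX Rp unfolding Dball_def by auto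
    qed
    have "mB \<le> measure mm (Dball X TH f (4*R))"
      unfolding mB_def using sub Dball_meas[OF fX] mm_sets by (intro finite_measure_mono) auto
    also have "\<dots> \<le> CC * ((4*R)/(r/2)) powr p * measure mm (D f)"
      unfolding D_def using r by (intro HOM[OF fX]) auto
    also have "(4*R)/(r/2) = 8 * (R/r)" by simp
    finally have "mB \<le> CC * (8 * (R/r)) powr p * measure mm (D f)" .
    moreover have "0 < CC * (8 * (R/r)) powr p" using consts_pos r by simp
    ultimately show ?thesis by (simp add: divide_le_eq mult.commute)
  qed
  have disj: "disjoint_family_on D F"
    unfolding disjoint_family_on_def
  proof (intro ballI impI)
    fix f g assume fg: "f \<in> F" "g \<in> F" "f \<noteq> g"
    show "D f \<inter> D g = {}"
    proof (rule ccontr)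
      assume "D f \<inter> D g \<noteq> {}"
      then obtain z where z: "z \<in> X" "TH f z < r/2" "TH g z < r/2" unfolding D_def Dball_def by auto
      have "TH f g \<le> TH f z + TH z g" using T4 fg(1,2) FX z(1) by blast
      then have "TH f g < r" using z TH_sym[of z g] by simp
      then show False using Fs[OF fg] by simp
    qed
  qed
  have sub2: "(\<Union>f\<in>F. D f) \<subseteq> Dball X TH x (2*R)"
  proof
    fix z assume "z \<in> (\<Union>f\<in>F. D f)"
    then obtain f where f: "f \<in> F" "z \<in> D f" by blast
    then have zX: "z \<in> X" and tz: "TH f z < r/2" unfolding D_def Dball_def by auto
    have fX: "f \<in> X" using f FX by auto
    have "TH x f < R" using f FB unfolding Dball_def by auto
    moreover have "TH x z \<le> TH x f + TH f z" by (rule T4[OF x fX zX])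
    ultimately show "z \<in> Dball X TH x (2*R)" using tz r zX unfolding Dball_def by auto
  qed
  have "real (card F) * (mB / (CC * (8 * (R/r)) powr p)) = (\<Sum>f\<in>F. mB / (CC * (8 * (R/r)) powr p))" by simp
  also have "\<dots> \<le> (\<Sum>f\<in>F. measure mm (D f))" using each by (rule sum_mono)
  also have "\<dots> = measure mm (\<Union>f\<in>F. D f)"
    using Ffin disj measD FX by (intro finite_measure_finite_Union[symmetric]) auto
  also have "\<dots> \<le> measure mm (Dball X TH x (2*R))"
    using sub2 Dball_meas[OF x] mm_sets by (intro finite_measure_mono) auto
  also have "\<dots> \<le> CC * ((2*R)/R) powr p * mB" unfolding mB_def using Rp by (intro HOM[OF x]) auto
  also have "(2*R)/R = 2" using Rp by simp
  finally have ineq: "real (card F) * (mB / (CC * (8 * (R/r)) powr p)) \<le> CC * 2 powr p * mB" .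
  have pos: "0 < CC * (8 * (R/r)) powr p" using consts_pos r by simp
  have "real (card F) * mB \<le> CC * 2 powr p * mB * (CC * (8 * (R/r)) powr p)"
    using ineq pos by (simp add: field_simps)
  then have "real (card F) \<le> CC * 2 powr p * (CC * (8 * (R/r)) powr p)"
    using mB by (simp add: field_simps)
  also have "\<dots> = CC^2 * (2 powr p * 8 powr p) * (R/r) powr p"
  proof -
    have e8: "(8 * (R/r)) powr p = 8 powr p * (R/r) powr p" by (rule powr_mult)
    show ?thesis unfolding e8 power2_eq_square by (simp only: mult_ac)
  qed
  also have "2 powr p * 8 powr p = 16 powr p" by (simp add: powr_mult[symmetric])
  finally show ?thesis unfolding CA_def by simp
qed

lemma cover_bound: assumes x: "x \<in> X" and r: "0 < r" "r \<le> R"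
  shows "ereal_of_enat (cover_num X TH (Dball X TH x R) r) \<le> ereal (CA * (R/r) powr p)"
proof -
  define B where "B = Dball X TH x R"
  define P where "P n \<longleftrightarrow> (\<exists>F. sepF B r F \<and> card F = n)" for n
  have P0: "P 0" unfolding P_def sepF_def by (intro exI[of _ "{}"]) auto
  have Pb: "\<forall>n. P n \<longrightarrow> n \<le> nat \<lceil>CA * (R/r) powr p\<rceil>"
  proof (intro allI impI)
    fix n assume "P n"
    then obtain F where F: "sepF B r F" "card F = n" unfolding P_def by blast
    have "real n \<le> CA * (R/r) powr p" using sep_card[OF x r F(1)[unfolded B_def]] F(2) by simp
    then show "n \<le> nat \<lceil>CA * (R/r) powr p\<rceil>" by linarith
  qed
  obtain n0 where n0: "P n0" "\<forall>y. P y \<longrightarrow> y \<le> n0" using Nat.ex_has_greatest_nat[OF P0 Pb] by blast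
  obtain F0 where F0: "sepF B r F0" "card F0 = n0" using n0(1) unfolding P_def by blast
  have F0X: "F0 \<subseteq> X" "finite F0" using F0(1) unfolding sepF_def B_def Dball_def by auto
  have cov: "B \<subseteq> (\<Union>c\<in>F0. Dball X TH c r)"
  proof
    fix y assume y: "y \<in> B"
    show "y \<in> (\<Union>c\<in>F0. Dball X TH c r)"
    proof (rule ccontr)
      assume nc: "y \<notin> (\<Union>c\<in>F0. Dball X TH c r)"
      have yX: "y \<in> X" using y unfolding B_def Dball_def by auto
      have far: "r \<le> TH c y" if "c \<in> F0" for c using nc that yX unfolding Dball_def by auto
      have yF: "y \<notin> F0"
      proof
        assume "y \<in> F0"
        then have "r \<le> TH y y" by (rule far)
        then show False using r by (simp add: Theta_def)
      qed
      have "sepF B r (insert y F0)"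
        using F0(1) y far TH_sym unfolding sepF_def by auto
      then have "P (Suc n0)" unfolding P_def using yF F0 F0X(2) by (intro exI[of _ "insert y F0"]) auto
      then show False using n0(2) by fastforce
    qed
  qed
  have "cover_num X TH B r \<le> enat (card F0)"
    unfolding cover_num_def using F0X cov by (intro INF_lower) auto
  then have "ereal_of_enat (cover_num X TH B r) \<le> ereal_of_enat (enat (card F0))"
    by (simp only: ereal_of_enat_le_iff)
  also have "\<dots> = ereal (real (card F0))" by simp
  also have "\<dots> \<le> ereal (CA * (R/r) powr p)"
    using sep_card[OF x r F0(1)[unfolded B_def]] by simp
  finally show ?thesis unfolding B_def .
qed

lemma assouad: "assouad_dim X TH \<le> ereal p"
proof -
  have "ereal p \<in> {ereal \<beta> | \<beta>. \<exists>C. \<forall>x\<in>X. \<forall>r R. 0 < r \<and> r \<le> R \<longrightarrow>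
      ereal_of_enat (cover_num X TH (Dball X TH x R) r) \<le> ereal (C * (R / r) powr \<beta>)}"
    using cover_bound by blast
  then show ?thesis unfolding assouad_dim_def by (rule Inf_lower)
qed

lemma homog: "p_homogeneous X TH p mm"
proof -
  interpret finite_measure mm by (rule mm_fin)
  have "emeasure mm X = ennreal (measure mm X)" by (simp add: emeasure_eq_measure)
  then have "emeasure mm X \<noteq> 0" using mm_Xone by simp
  then show ?thesis unfolding p_homogeneous_def using HOM by blast
qed

end


theorem proposition3p16:
  fixes X :: "'a::metric_space set" and a lam :: real and Xs :: "nat \<Rightarrow> 'a set" and x0 :: 'a
    and par :: "'a \<times> nat \<Rightarrow> 'a \<times> nat" and rho :: "'a \<times> nat \<Rightarrow> real"
    and p em ep C :: real and mu :: "nat \<Rightarrow> 'a \<times> nat \<Rightarrow> real" and \<mu> :: "'a measure"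
  assumes "compact X" and "doubling X" and "diameter X = 1/2"
    and "hyperbolic_filling X a lam Xs x0 par"
    and "0 < p"
    and "H1 Xs rho em ep"
    and "H2 X a lam Xs par rho"
    and "H3 X a lam Xs par rho"
    and "H4 Xs par rho p"
    and "em powr (- p) \<le> C"
    and "\<forall>k. \<forall>u\<in>level Xs k. 0 < mu k u"
    and "\<forall>k. (\<Sum>u\<in>level Xs k. mu k u) = 1"
    and "mu 0 (x0, 0) = 1"
    and "\<forall>k. compatible Xs par rho p C k (mu k) (mu (Suc k))"
    and "\<forall>k. balanced X a lam Xs par rho p C (Suc k) (mu (Suc k))"
    and "\<forall>k. coupled (tmu (level Xs k) (mu k)) (tmu (level Xs (Suc k)) (mu (Suc k)))
                   ((1 + 2 * lam / a) * (1/a) ^ k)"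
    and "sub_weak_limit (\<lambda>k. tmu (level Xs k) (mu k)) \<mu>"
  shows "p_homogeneous X (Theta X a Xs par rho) p \<mu> \<and>
         assouad_dim X (Theta X a Xs par rho) \<le> ereal p"
proof -
  interpret PS X a lam Xs x0 par rho p em ep C mu \<mu>
    by (rule PS.intro[OF assms(1-8) assms(10-12) assms(14-17)])
  show ?thesis using homog assouad by blast
qed

end
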